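(* As $n\to\infty$, $k(n)=\sqrt{n}\,(1+o(1))$.
   Context: A system on $n$ elements is a triple $(\mathcal{F},w,s)$ where $\mathcal{F}=(F_1,\dots,F_m)$ is a collection of subsets of $[n]=\{1,\dots,n\}$, $w\in[0,1]^m$ with $\sum_i w_i=1$, and $s\in[0,1]^{m\times m\times n}$ with $\sum_p s_{ijp}=1$ for all $i,j\in[m]$. It is intersecting if for all $i,j\in[m]$, $p\in[n]$: $s_{ijp}>0$ implies $p\in F_i\cap F_j$. It is balanced if for all $p\in[n]$, $\sum_{i=1}^m\sum_{j=1}^m w_iw_js_{ijp}=1/n$. Its cardinality is the size of the largest set in $\mathcal{F}$. $k(n)$ is the minimum $k$ such that there exists a balanced intersecting system on $n$ elements with cardinality $k$. *)

theory Defs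
  imports Complex_Main "HOL-Library.Landau_Symbols"
begin

definition is_system ::
  "nat \<Rightarrow> nat \<Rightarrow> (nat \<Rightarrow> nat set) \<Rightarrow> (nat \<Rightarrow> real) \<Rightarrow> (nat \<Rightarrow> nat \<Rightarrow> nat \<Rightarrow> real) \<Rightarrow> bool" where
  "is_system n m F w s \<longleftrightarrow>
     (\<forall>i\<in>{1..m}. F i \<subseteq> {1..n}) \<and>
     (\<forall>i\<in>{1..m}. 0 \<le> w i \<and> w i \<le> 1) \<and>
     (\<Sum>i=1..m. w i) = 1 \<and>
     (\<forall>i\<in>{1..m}. \<forall>j\<in>{1..m}. \<forall>p\<in>{1..n}. 0 \<le> s i j p \<and> s i j p \<le> 1) \<and>
     (\<forall>i\<in>{1..m}. \<forall>j\<in>{1..m}. (\<Sum>p=1..n. s i j p) = 1)"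

definition is_intersecting ::
  "nat \<Rightarrow> nat \<Rightarrow> (nat \<Rightarrow> nat set) \<Rightarrow> (nat \<Rightarrow> nat \<Rightarrow> nat \<Rightarrow> real) \<Rightarrow> bool" where
  "is_intersecting n m F s \<longleftrightarrow>
     (\<forall>i\<in>{1..m}. \<forall>j\<in>{1..m}. \<forall>p\<in>{1..n}. s i j p > 0 \<longrightarrow> p \<in> F i \<inter> F j)"

definition is_balanced ::
  "nat \<Rightarrow> nat \<Rightarrow> (nat \<Rightarrow> real) \<Rightarrow> (nat \<Rightarrow> nat \<Rightarrow> nat \<Rightarrow> real) \<Rightarrow> bool" where
  "is_balanced n m w s \<longleftrightarrow>
     (\<forall>p\<in>{1..n}. (\<Sum>i=1..m. \<Sum>j=1..m. w i * w j * s i j p) = 1 / real n)"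

definition system_cardinality :: "nat \<Rightarrow> (nat \<Rightarrow> nat set) \<Rightarrow> nat" where
  "system_cardinality m F = Max ((\<lambda>i. card (F i)) ` {1..m})"

definition k_min :: "nat \<Rightarrow> nat" where
  "k_min n = (LEAST k. \<exists>m F w s. is_system n m F w s \<and> is_intersecting n m F s \<and>
                  is_balanced n m w s \<and> system_cardinality m F = k)"

end

theory Submission
  imports Defs "HOL-Number_Theory.Number_Theory" "HOL-Real_Asymp.Real_Asymp"
begin

definition gsys :: "'x set \<Rightarrow> 'i set \<Rightarrow> ('i \<Rightarrow> 'x set) \<Rightarrow> ('i \<Rightarrow> real) \<Rightarrow> ('i \<Rightarrow> 'i \<Rightarrow> 'x \<Rightarrow> real) \<Rightarrow> nat \<Rightarrow> bool" where
 "gsys X I F w s K \<longleftrightarrow> finite X \<and> finite I \<and> (\<forall>i\<in>I. F i \<subseteq> X \<and> card (F i) \<le> K) \<and> (\<forall>i\<in>I. 0 \<le> w i) \<and> sum w I = 1 \<and>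
   (\<forall>i\<in>I. \<forall>j\<in>I. (\<forall>x\<in>X. 0 \<le> s i j x) \<and> sum (s i j) X = 1 \<and> (\<forall>x\<in>X. s i j x > 0 \<longrightarrow> x \<in> F i \<inter> F j)) \<and>
   (\<forall>x\<in>X. (\<Sum>i\<in>I. \<Sum>j\<in>I. w i * w j * s i j x) = 1 / card X)"

definition good :: "nat \<Rightarrow> nat \<Rightarrow> bool" where
 "good n K \<longleftrightarrow> (\<exists>m F w s. is_system n m F w s \<and> is_intersecting n m F s \<and> is_balanced n m w s \<and> system_cardinality m F \<le> K)"

lemma gsys_good:
  assumes "gsys X I F w s K"
  shows "good (card X) K"
proof -
  from assms have fX: "finite X" and fI: "finite I" by (auto simp: gsys_def)
  define n where "n = card X"
  define m where "m = card I"
  obtain f where f: "bij_betw f {0..<n} X" using ex_bij_betw_nat_finite[OF fX] n_def by auto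
  obtain g where g: "bij_betw g {0..<m} I" using ex_bij_betw_nat_finite[OF fI] m_def by auto
  define f' where "f' = (\<lambda>p. f (p - 1))"
  define g' where "g' = (\<lambda>p. g (p - 1))"
  have sh: "bij_betw (\<lambda>p. p - 1) {1..k} {0..<k}" for k :: nat
    by (rule bij_betw_byWitness[where f'="\<lambda>p. p + 1"]) auto
  have f': "bij_betw f' {1..n} X" unfolding f'_def using bij_betw_trans[OF sh f] by (simp add: comp_def)
  have g': "bij_betw g' {1..m} I" unfolding g'_def using bij_betw_trans[OF sh g] by (simp add: comp_def)
  define F' where "F' = (\<lambda>i. {p\<in>{1..n}. f' p \<in> F (g' i)})"
  define w' where "w' = (\<lambda>i. w (g' i))"
  define s' where "s' = (\<lambda>i j p. s (g' i) (g' j) (f' p))"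
  have gI: "g' i \<in> I" if "i \<in> {1..m}" for i using g' that by (auto simp: bij_betw_def)
  have fX': "f' p \<in> X" if "p \<in> {1..n}" for p using f' that by (auto simp: bij_betw_def)
  have sumX: "(\<Sum>p\<in>{1..n}. h (f' p)) = (\<Sum>x\<in>X. h x)" for h :: "_ \<Rightarrow> real"
    using sum.reindex_bij_betw[OF f'] .
  have sumI: "(\<Sum>i\<in>{1..m}. h (g' i)) = (\<Sum>i\<in>I. h i)" for h :: "_ \<Rightarrow> real"
    using sum.reindex_bij_betw[OF g'] .
  have wsum: "sum w I = 1" and wnn: "\<forall>i\<in>I. 0 \<le> w i" using assms by (auto simp: gsys_def)
  have wle: "w i \<le> 1" if "i \<in> I" for i
    using member_le_sum[of i I w] wnn wsum fI that by auto
  have ssum: "sum (s i j) X = 1" and snn: "\<forall>x\<in>X. 0 \<le> s i j x" if "i \<in> I" "j \<in> I" for i j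
    using assms that by (auto simp: gsys_def)
  have sle: "s i j x \<le> 1" if "i \<in> I" "j \<in> I" "x \<in> X" for i j x
    using member_le_sum[of x X "s i j"] ssum[OF that(1,2)] snn[OF that(1,2)] fX that by auto
  have sys: "is_system n m F' w' s'"
    unfolding is_system_def
  proof (intro conjI ballI)
    show "F' i \<subseteq> {1..n}" for i by (auto simp: F'_def)
    show "0 \<le> w' i" "w' i \<le> 1" if "i \<in> {1..m}" for i using wnn wle gI[OF that] by (auto simp: w'_def)
    show "sum w' {1..m} = 1" using sumI[of w] wsum by (simp add: w'_def)
    show "0 \<le> s' i j p" "s' i j p \<le> 1" if "i \<in> {1..m}" "j \<in> {1..m}" "p \<in> {1..n}" for i j p
      using snn[OF gI[OF that(1)] gI[OF that(2)]] sle[OF gI[OF that(1)] gI[OF that(2)] fX'[OF that(3)]] fX'[OF that(3)] by (auto simp: s'_def)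
    show "(\<Sum>p = 1..n. s' i j p) = 1" if "i \<in> {1..m}" "j \<in> {1..m}" for i j
      using sumX[of "s (g' i) (g' j)"] ssum[OF gI[OF that(1)] gI[OF that(2)]] by (simp add: s'_def)
  qed
  have int: "is_intersecting n m F' s'"
    unfolding is_intersecting_def
  proof (intro ballI impI)
    fix i j p assume i: "i \<in> {1..m}" and j: "j \<in> {1..m}" and p: "p \<in> {1..n}" and pos: "0 < s' i j p"
    have "f' p \<in> F (g' i) \<inter> F (g' j)" using assms gI[OF i] gI[OF j] fX'[OF p] pos
      unfolding gsys_def s'_def by blast
    then show "p \<in> F' i \<inter> F' j" using p by (auto simp: F'_def)
  qed
  have bal: "is_balanced n m w' s'"
    unfolding is_balanced_def
  proof
    fix p assume p: "p \<in> {1..n}"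
    have "(\<Sum>i = 1..m. \<Sum>j = 1..m. w' i * w' j * s' i j p) = (\<Sum>i\<in>I. \<Sum>j\<in>I. w i * w j * s i j (f' p))"
      unfolding w'_def s'_def
      using sumI[of "\<lambda>i. \<Sum>j = 1..m. w i * w (g' j) * s i (g' j) (f' p)"]
        sumI[of "\<lambda>j. w _ * w j * s _ j (f' p)"] by simp
    also have "\<dots> = 1 / card X" using assms fX'[OF p] by (auto simp: gsys_def)
    finally show "(\<Sum>i = 1..m. \<Sum>j = 1..m. w' i * w' j * s' i j p) = 1 / real n" by (simp add: n_def)
  qed
  have m1: "m \<ge> 1" proof (rule ccontr)
    assume "\<not> m \<ge> 1" then have "I = {}" using fI m_def card_0_eq by fastforce
    then show False using wsum by simp
  qed
  have cardF: "card (F' i) \<le> K" if "i \<in> {1..m}" for i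
  proof -
    have "bij_betw f' (F' i) (F (g' i))"
    proof -
      have "F (g' i) \<subseteq> X" using assms gI[OF that] by (auto simp: gsys_def)
      then have "f' ` F' i = F (g' i)" using f' unfolding F'_def bij_betw_def by auto
      moreover have "inj_on f' (F' i)" using f' unfolding bij_betw_def F'_def by (auto intro: inj_on_subset)
      ultimately show ?thesis by (simp add: bij_betw_def)
    qed
    then have "card (F' i) = card (F (g' i))" by (rule bij_betw_same_card)
    also have "\<dots> \<le> K" using assms gI[OF that] by (auto simp: gsys_def)
    finally show ?thesis .
  qed
  have "system_cardinality m F' \<le> K"
    unfolding system_cardinality_def using m1 cardF by (subst Max_le_iff) auto
  then show ?thesis unfolding good_def using sys int bal n_def by blast
qed

lemma good_k_min: "good n K \<Longrightarrow> k_min n \<le> K"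
  unfolding good_def k_min_def
  by (metis (mono_tags, lifting) Least_le le_trans)

lemma trivial_gsys: "n \<ge> 1 \<Longrightarrow> gsys {1..n} {0::nat} (\<lambda>_. {1..n}) (\<lambda>_. 1) (\<lambda>_ _ _. 1 / real n) n"
  unfolding gsys_def by auto

lemma good_trivial: "n \<ge> 1 \<Longrightarrow> good n n"
  using gsys_good[OF trivial_gsys] by simp

lemma k_min_le: "n \<ge> 1 \<Longrightarrow> k_min n \<le> n"
  using good_k_min good_trivial by blast

lemma k_min_ex: assumes "n \<ge> 1"
  shows "\<exists>m F w s. is_system n m F w s \<and> is_intersecting n m F s \<and> is_balanced n m w s \<and> system_cardinality m F = k_min n"
proof -
  obtain m F w s where "is_system n m F w s \<and> is_intersecting n m F s \<and> is_balanced n m w s \<and> system_cardinality m F \<le> n"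
    using good_trivial[OF assms] unfolding good_def by blast
  then have ex: "\<exists>k m F w s. is_system n m F w s \<and> is_intersecting n m F s \<and> is_balanced n m w s \<and> system_cardinality m F = k" by blast
  show ?thesis unfolding k_min_def by (rule LeastI_ex[OF ex])
qed

lemma sum_ind_card: "finite A \<Longrightarrow> (\<Sum>p\<in>A. (if p \<in> B then 1 else 0 :: real)) = real (card (A \<inter> B))"
  by (simp add: sum.If_cases)

lemma lower_bound_sys:
  assumes n: "n \<ge> 1" and sys: "is_system n m F w s" and int: "is_intersecting n m F s"
    and bal: "is_balanced n m w s"
  shows "sqrt (real n) \<le> real (system_cardinality m F)"
proof -
  define k where "k = system_cardinality m F"
  define x where "x = (\<lambda>p. \<Sum>i=1..m. w i * (if p \<in> F i then 1 else 0))"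
  have wnn: "0 \<le> w i" if "i \<in> {1..m}" for i using sys that by (auto simp: is_system_def)
  have wsum: "(\<Sum>i=1..m. w i) = 1" using sys by (auto simp: is_system_def)
  have Fsub: "F i \<subseteq> {1..n}" if "i \<in> {1..m}" for i using sys that by (auto simp: is_system_def)
  have m1: "m \<ge> 1" using wsum by (cases m) auto
  have cardk: "card (F i) \<le> k" if "i \<in> {1..m}" for i
    unfolding k_def system_cardinality_def using that m1 by (intro Max_ge) auto
  have xnn: "0 \<le> x p" for p unfolding x_def using wnn by (intro sum_nonneg) auto
  have sle: "s i j p \<le> (if p \<in> F i then 1 else 0) * (if p \<in> F j then 1 else 0)"
    if "i \<in> {1..m}" "j \<in> {1..m}" "p \<in> {1..n}" for i j p
  proof (cases "p \<in> F i \<inter> F j")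
    case True then show ?thesis using sys that by (auto simp: is_system_def)
  next
    case False then have "\<not> s i j p > 0" using int that by (auto simp: is_intersecting_def)
    then show ?thesis using False by auto
  qed
  have xp: "1 / real n \<le> (x p)^2" if p: "p \<in> {1..n}" for p
  proof -
    have "1 / real n = (\<Sum>i=1..m. \<Sum>j=1..m. w i * w j * s i j p)" using bal p by (auto simp: is_balanced_def)
    also have "\<dots> \<le> (\<Sum>i=1..m. \<Sum>j=1..m. w i * w j * ((if p \<in> F i then 1 else 0) * (if p \<in> F j then 1 else 0)))"
      by (intro sum_mono mult_left_mono sle p) (auto intro!: mult_nonneg_nonneg wnn)
    also have "\<dots> = (x p)^2" unfolding x_def power2_eq_square sum_product
      by (intro sum.cong refl) (simp add: algebra_simps)
    finally show ?thesis .
  qed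
  have xp2: "1 / sqrt (real n) \<le> x p" if p: "p \<in> {1..n}" for p
  proof -
    have "sqrt (1 / real n) \<le> sqrt ((x p)^2)" using xp[OF p] by (rule real_sqrt_le_mono)
    then show ?thesis using xnn[of p] by (simp add: real_sqrt_divide)
  qed
  have "(\<Sum>p=1..n. x p) = (\<Sum>i=1..m. w i * real (card ({1..n} \<inter> F i)))"
    unfolding x_def by (subst sum.swap) (simp add: sum_distrib_left[symmetric] sum_ind_card)
  also have "\<dots> \<le> (\<Sum>i=1..m. w i * real k)"
  proof (intro sum_mono mult_left_mono wnn)
    fix i assume i: "i \<in> {1..m}"
    have "{1..n} \<inter> F i = F i" using Fsub[OF i] by auto
    then show "real (card ({1..n} \<inter> F i)) \<le> real k" using cardk[OF i] by simp
  qed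
  also have "\<dots> = real k" using wsum by (simp add: sum_distrib_right[symmetric])
  finally have sx: "(\<Sum>p=1..n. x p) \<le> real k" .
  have "(\<Sum>p=1..n. 1 / sqrt (real n)) \<le> (\<Sum>p=1..n. x p)" by (intro sum_mono xp2) auto
  then have "real n / sqrt (real n) \<le> real k" using sx by simp
  moreover have "real n / sqrt (real n) = sqrt (real n)" using n by (simp add: real_div_sqrt)
  ultimately show ?thesis by (simp add: k_def)
qed

lemma k_min_lower: "n \<ge> 1 \<Longrightarrow> sqrt (real n) \<le> real (k_min n)"
  using k_min_ex[of n] lower_bound_sys by metis

lemma sys_gsys:
  assumes sys: "is_system n m F w s" and int: "is_intersecting n m F s" and bal: "is_balanced n m w s"
  shows "gsys {1..n} {1..m} F w s (system_cardinality m F)"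
proof -
  have wsum: "(\<Sum>i=1..m. w i) = 1" using sys by (auto simp: is_system_def)
  have m1: "m \<ge> 1" using wsum by (cases m) auto
  have cardk: "card (F i) \<le> system_cardinality m F" if "i \<in> {1..m}" for i
    unfolding system_cardinality_def using that m1 by (intro Max_ge) auto
  show ?thesis unfolding gsys_def using sys int bal cardk
    by (auto simp: is_system_def is_intersecting_def is_balanced_def)
qed

lemma k_min_gsys: assumes "n \<ge> 1"
  shows "\<exists>m F w s. gsys {1..n} {1..m::nat} F w s (k_min n)"
  using k_min_ex[OF assms] sys_gsys by metis

lemma sum_prod_split: "sum f (A \<times> B) = (\<Sum>a\<in>A. \<Sum>b\<in>B. f (a,b))"
  by (simp add: sum.cartesian_product)

lemma gsys_prod:
  assumes A: "gsys X I F w s K1" and B: "gsys Y J G u t K2"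
  shows "gsys (X \<times> Y) (I \<times> J) (\<lambda>(i,j). F i \<times> G j) (\<lambda>(i,j). w i * u j)
     (\<lambda>(i,j) (i',j') (x,y). s i i' x * t j j' y) (K1 * K2)"
proof -
  from A have fX: "finite X" and fI: "finite I" and FX: "\<forall>i\<in>I. F i \<subseteq> X \<and> card (F i) \<le> K1"
    and wnn: "\<forall>i\<in>I. 0 \<le> w i" and ws: "sum w I = 1"
    and sp: "\<forall>i\<in>I. \<forall>j\<in>I. (\<forall>x\<in>X. 0 \<le> s i j x) \<and> sum (s i j) X = 1 \<and> (\<forall>x\<in>X. s i j x > 0 \<longrightarrow> x \<in> F i \<inter> F j)"
    and bA: "\<forall>x\<in>X. (\<Sum>i\<in>I. \<Sum>j\<in>I. w i * w j * s i j x) = 1 / card X"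
    unfolding gsys_def by auto
  from B have fY: "finite Y" and fJ: "finite J" and GY: "\<forall>i\<in>J. G i \<subseteq> Y \<and> card (G i) \<le> K2"
    and unn: "\<forall>i\<in>J. 0 \<le> u i" and us: "sum u J = 1"
    and tp: "\<forall>i\<in>J. \<forall>j\<in>J. (\<forall>x\<in>Y. 0 \<le> t i j x) \<and> sum (t i j) Y = 1 \<and> (\<forall>x\<in>Y. t i j x > 0 \<longrightarrow> x \<in> G i \<inter> G j)"
    and bB: "\<forall>x\<in>Y. (\<Sum>i\<in>J. \<Sum>j\<in>J. u i * u j * t i j x) = 1 / card Y"
    unfolding gsys_def by auto
  have c1: "finite (X \<times> Y)" "finite (I \<times> J)" using fX fY fI fJ by auto
  have c2: "\<forall>z\<in>I \<times> J. (case z of (i, j) \<Rightarrow> F i \<times> G j) \<subseteq> X \<times> Y \<and> card (case z of (i, j) \<Rightarrow> F i \<times> G j) \<le> K1 * K2"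
  proof
    fix z assume "z \<in> I \<times> J"
    then obtain i j where z: "z = (i,j)" "i \<in> I" "j \<in> J" by auto
    have "card (F i \<times> G j) = card (F i) * card (G j)" by (simp add: card_cartesian_product)
    also have "\<dots> \<le> K1 * K2" using z FX GY by (intro mult_le_mono) auto
    finally show "(case z of (i, j) \<Rightarrow> F i \<times> G j) \<subseteq> X \<times> Y \<and> card (case z of (i, j) \<Rightarrow> F i \<times> G j) \<le> K1 * K2" using z FX GY by auto
  qed
  have c3: "\<forall>z\<in>I \<times> J. 0 \<le> (case z of (i, j) \<Rightarrow> w i * u j)" using wnn unn by auto
  have c4: "sum (\<lambda>(i, j). w i * u j) (I \<times> J) = 1"
      using ws us by (simp add: sum.cartesian_product[symmetric] sum_product[symmetric])
  have c5: "\<forall>z\<in>I \<times> J. \<forall>z'\<in>I \<times> J. (\<forall>x\<in>X \<times> Y. 0 \<le> (\<lambda>(i,j) (i',j') (x,y). s i i' x * t j j' y) z z' x) \<and>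
     sum ((\<lambda>(i,j) (i',j') (x,y). s i i' x * t j j' y) z z') (X \<times> Y) = 1 \<and>
     (\<forall>x\<in>X \<times> Y. (\<lambda>(i,j) (i',j') (x,y). s i i' x * t j j' y) z z' x > 0 \<longrightarrow> x \<in> (\<lambda>(i,j). F i \<times> G j) z \<inter> (\<lambda>(i,j). F i \<times> G j) z')"
  proof (intro ballI conjI)
    fix z z' assume zz: "z \<in> I \<times> J" "z' \<in> I \<times> J"
    then obtain i j i' j' where z: "z = (i,j)" "i \<in> I" "j \<in> J" "z' = (i',j')" "i' \<in> I" "j' \<in> J" by auto
    show "0 \<le> (\<lambda>(i,j) (i',j') (x,y). s i i' x * t j j' y) z z' xy" if "xy \<in> X \<times> Y" for xy
      using z sp tp that by auto
    have "(\<Sum>x\<in>X\<times>Y. (case x of (x, y) \<Rightarrow> s i i' x * t j j' y)) = (\<Sum>x\<in>X. s i i' x) * (\<Sum>y\<in>Y. t j j' y)"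
      by (simp add: sum.cartesian_product[symmetric] sum_product)
    then show "sum ((\<lambda>(i,j) (i',j') (x,y). s i i' x * t j j' y) z z') (X \<times> Y) = 1"
      using z sp tp by simp
    show "(\<lambda>(i,j) (i',j') (x,y). s i i' x * t j j' y) z z' xy > 0 \<longrightarrow> xy \<in> (\<lambda>(i,j). F i \<times> G j) z \<inter> (\<lambda>(i,j). F i \<times> G j) z'"
      if xy: "xy \<in> X \<times> Y" for xy
    proof
      assume pos: "(\<lambda>(i,j) (i',j') (x,y). s i i' x * t j j' y) z z' xy > 0"
      obtain x y where xy': "xy = (x,y)" "x \<in> X" "y \<in> Y" using xy by auto
      have nn: "0 \<le> s i i' x" "0 \<le> t j j' y" using z sp tp xy' by auto
      have "0 < s i i' x * t j j' y" using pos z xy' by simp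
      then have "0 < s i i' x" "0 < t j j' y" using nn
        by (metis less_eq_real_def mult_eq_0_iff)+
      then show "xy \<in> (\<lambda>(i,j). F i \<times> G j) z \<inter> (\<lambda>(i,j). F i \<times> G j) z'"
        using z sp tp xy' by auto
    qed
  qed
  have c6: "\<forall>xy\<in>X \<times> Y. (\<Sum>z\<in>I \<times> J. \<Sum>z'\<in>I \<times> J. (\<lambda>(i,j). w i * u j) z * (\<lambda>(i,j). w i * u j) z' *
             (\<lambda>(i,j) (i',j') (x,y). s i i' x * t j j' y) z z' xy) = 1 / card (X \<times> Y)"
  proof
    fix xy assume "xy \<in> X \<times> Y"
    then obtain x y where xy: "xy = (x,y)" "x \<in> X" "y \<in> Y" by auto
    have "(\<Sum>z\<in>I \<times> J. \<Sum>z'\<in>I \<times> J. (\<lambda>(i,j). w i * u j) z * (\<lambda>(i,j). w i * u j) z' *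
             (\<lambda>(i,j) (i',j') (x,y). s i i' x * t j j' y) z z' xy)
        = (\<Sum>i\<in>I. \<Sum>j\<in>J. \<Sum>i'\<in>I. \<Sum>j'\<in>J. (w i * w i' * s i i' x) * (u j * u j' * t j j' y))"
      using xy by (simp add: sum_prod_split algebra_simps)
    also have "\<dots> = (\<Sum>i\<in>I. \<Sum>i'\<in>I. \<Sum>j\<in>J. \<Sum>j'\<in>J. (w i * w i' * s i i' x) * (u j * u j' * t j j' y))"
      by (intro sum.cong refl, rule sum.swap)
    also have "\<dots> = (\<Sum>i\<in>I. \<Sum>i'\<in>I. (w i * w i' * s i i' x) * (\<Sum>j\<in>J. \<Sum>j'\<in>J. u j * u j' * t j j' y))"
      by (simp add: sum_distrib_left)
    also have "\<dots> = (\<Sum>i\<in>I. \<Sum>i'\<in>I. w i * w i' * s i i' x) * (\<Sum>j\<in>J. \<Sum>j'\<in>J. u j * u j' * t j j' y)"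
      by (simp add: sum_distrib_right)
    also have "\<dots> = 1 / card (X \<times> Y)" using bA bB xy by (simp add: card_cartesian_product)
    finally show "(\<Sum>z\<in>I \<times> J. \<Sum>z'\<in>I \<times> J. (\<lambda>(i,j). w i * u j) z * (\<lambda>(i,j). w i * u j) z' *
             (\<lambda>(i,j) (i',j') (x,y). s i i' x * t j j' y) z z' xy) = 1 / card (X \<times> Y)" .
  qed
  show ?thesis unfolding gsys_def using c1 c2 c3 c4 c5 c6 by blast
qed

lemma k_min_mult: assumes "a \<ge> 1" "b \<ge> 1" shows "k_min (a * b) \<le> k_min a * k_min b"
proof -
  obtain m F w s where A: "gsys {1..a} {1..m::nat} F w s (k_min a)" using k_min_gsys[OF assms(1)] by blast
  obtain m' G u t where B: "gsys {1..b} {1..m'::nat} G u t (k_min b)" using k_min_gsys[OF assms(2)] by blast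
  have "good (card ({1..a} \<times> {1..b})) (k_min a * k_min b)" by (rule gsys_good[OF gsys_prod[OF A B]])
  then show ?thesis using good_k_min by (simp add: card_cartesian_product)
qed

lemma gsys_sum:
  assumes A: "gsys X I F w s K1" and B: "gsys Y J G u t K2"
  defines "a \<equiv> real (card X) / real (card X + card Y)"
  defines "b \<equiv> real (card Y) / real (card X + card Y)"
  shows "gsys (X <+> Y) (I \<times> J) (\<lambda>(i,j). Inl ` F i \<union> Inr ` G j) (\<lambda>(i,j). w i * u j)
     (\<lambda>(i,j) (i',j') z. case z of Inl x \<Rightarrow> a * s i i' x | Inr y \<Rightarrow> b * t j j' y) (K1 + K2)"
proof -
  from A have fX: "finite X" and fI: "finite I" and FX: "\<forall>i\<in>I. F i \<subseteq> X \<and> card (F i) \<le> K1"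
    and wnn: "\<forall>i\<in>I. 0 \<le> w i" and ws: "sum w I = 1"
    and sp: "\<forall>i\<in>I. \<forall>j\<in>I. (\<forall>x\<in>X. 0 \<le> s i j x) \<and> sum (s i j) X = 1 \<and> (\<forall>x\<in>X. s i j x > 0 \<longrightarrow> x \<in> F i \<inter> F j)"
    and bA: "\<forall>x\<in>X. (\<Sum>i\<in>I. \<Sum>j\<in>I. w i * w j * s i j x) = 1 / card X"
    unfolding gsys_def by auto
  from B have fY: "finite Y" and fJ: "finite J" and GY: "\<forall>i\<in>J. G i \<subseteq> Y \<and> card (G i) \<le> K2"
    and unn: "\<forall>i\<in>J. 0 \<le> u i" and us: "sum u J = 1"
    and tp: "\<forall>i\<in>J. \<forall>j\<in>J. (\<forall>x\<in>Y. 0 \<le> t i j x) \<and> sum (t i j) Y = 1 \<and> (\<forall>x\<in>Y. t i j x > 0 \<longrightarrow> x \<in> G i \<inter> G j)"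
    and bB: "\<forall>x\<in>Y. (\<Sum>i\<in>J. \<Sum>j\<in>J. u i * u j * t i j x) = 1 / card Y"
    unfolding gsys_def by auto
  have Ine: "I \<noteq> {}" using ws by auto
  have Jne: "J \<noteq> {}" using us by auto
  have Xne: "X \<noteq> {}" using sp Ine by fastforce
  have Yne: "Y \<noteq> {}" using tp Jne by fastforce
  have cX: "card X > 0" using Xne fX by (simp add: card_gt_0_iff)
  have cY: "card Y > 0" using Yne fY by (simp add: card_gt_0_iff)
  have ab: "a + b = 1" using cX cY unfolding a_def b_def by (simp add: add_divide_distrib[symmetric])
  have anl: "0 \<le> a" "0 \<le> b" unfolding a_def b_def by auto
  have apos: "0 < a" "0 < b" unfolding a_def b_def using cX cY by auto
  define S where "S = (\<lambda>(i,j) (i',j') z. case z of Inl x \<Rightarrow> a * s i i' x | Inr y \<Rightarrow> b * t j j' y)"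
  define FF where "FF = (\<lambda>(i,j). Inl ` F i \<union> Inr ` G j)"
  define W where "W = (\<lambda>(i,j). w i * u j)"
  have c1: "finite (X <+> Y)" "finite (I \<times> J)" using fX fY fI fJ by auto
  have c2: "\<forall>z\<in>I \<times> J. FF z \<subseteq> X <+> Y \<and> card (FF z) \<le> K1 + K2"
  proof
    fix z assume "z \<in> I \<times> J"
    then obtain i j where z: "z = (i,j)" "i \<in> I" "j \<in> J" by auto
    have fF: "finite (F i)" "finite (G j)" using z FX GY fX fY by (meson finite_subset)+
    have "card (FF z) \<le> card (Inl ` F i :: ('a + 'c) set) + card (Inr ` G j :: ('a + 'c) set)"
      unfolding FF_def z by (simp add: card_Un_le)
    also have "\<dots> = card (F i) + card (G j)" by (simp add: card_image)
    also have "\<dots> \<le> K1 + K2" using z FX GY by (intro add_mono) auto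
    finally show "FF z \<subseteq> X <+> Y \<and> card (FF z) \<le> K1 + K2" using z FX GY unfolding FF_def by auto
  qed
  have c3: "\<forall>z\<in>I \<times> J. 0 \<le> W z" using wnn unn by (auto simp: W_def)
  have c4: "sum W (I \<times> J) = 1"
      using ws us by (simp add: W_def sum.cartesian_product[symmetric] sum_product[symmetric])
  have c5: "\<forall>z\<in>I \<times> J. \<forall>z'\<in>I \<times> J. (\<forall>x\<in>X <+> Y. 0 \<le> S z z' x) \<and> sum (S z z') (X <+> Y) = 1 \<and>
     (\<forall>x\<in>X <+> Y. S z z' x > 0 \<longrightarrow> x \<in> FF z \<inter> FF z')"
  proof (intro ballI conjI)
    fix z z' assume zz: "z \<in> I \<times> J" "z' \<in> I \<times> J"
    then obtain i j i' j' where z: "z = (i,j)" "i \<in> I" "j \<in> J" "z' = (i',j')" "i' \<in> I" "j' \<in> J" by auto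
    show "0 \<le> S z z' xy" if "xy \<in> X <+> Y" for xy
      using z sp tp that anl by (auto simp: S_def)
    have "sum (S z z') (X <+> Y) = a * sum (s i i') X + b * sum (t j j') Y"
      using fX fY z by (simp add: S_def sum.Plus sum_distrib_left comp_def)
    then show "sum (S z z') (X <+> Y) = 1" using z sp tp ab by simp
    show "S z z' xy > 0 \<longrightarrow> xy \<in> FF z \<inter> FF z'" if xy: "xy \<in> X <+> Y" for xy
    proof
      assume pos: "S z z' xy > 0"
      show "xy \<in> FF z \<inter> FF z'"
      proof (cases xy)
        case (Inl x)
        then have "x \<in> X" using xy by auto
        moreover have "s i i' x > 0" using pos Inl z anl by (auto simp: S_def zero_less_mult_iff)
        ultimately show ?thesis using Inl z sp by (auto simp: FF_def)
      next
        case (Inr y)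
        then have "y \<in> Y" using xy by auto
        moreover have "t j j' y > 0" using pos Inr z anl by (auto simp: S_def zero_less_mult_iff)
        ultimately show ?thesis using Inr z tp by (auto simp: FF_def)
      qed
    qed
  qed
  have cP: "card (X <+> Y) = card X + card Y" using fX fY by (simp add: card_Plus)
  have c6: "\<forall>xy\<in>X <+> Y. (\<Sum>z\<in>I \<times> J. \<Sum>z'\<in>I \<times> J. W z * W z' * S z z' xy) = 1 / card (X <+> Y)"
  proof
    fix xy assume xy: "xy \<in> X <+> Y"
    show "(\<Sum>z\<in>I \<times> J. \<Sum>z'\<in>I \<times> J. W z * W z' * S z z' xy) = 1 / card (X <+> Y)"
    proof (cases xy)
      case (Inl x)
      then have x: "x \<in> X" using xy by auto
      have "(\<Sum>z\<in>I \<times> J. \<Sum>z'\<in>I \<times> J. W z * W z' * S z z' xy)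
        = (\<Sum>i\<in>I. \<Sum>j\<in>J. \<Sum>i'\<in>I. \<Sum>j'\<in>J. (w i * w i' * s i i' x) * (a * u j * u j'))"
        using Inl by (simp add: sum_prod_split W_def S_def algebra_simps)
      also have "\<dots> = (\<Sum>i\<in>I. \<Sum>i'\<in>I. \<Sum>j\<in>J. \<Sum>j'\<in>J. (w i * w i' * s i i' x) * (a * u j * u j'))"
        by (intro sum.cong refl, rule sum.swap)
      also have "\<dots> = (\<Sum>i\<in>I. \<Sum>i'\<in>I. (w i * w i' * s i i' x) * (\<Sum>j\<in>J. \<Sum>j'\<in>J. a * u j * u j'))"
        by (simp add: sum_distrib_left)
      also have "\<dots> = (\<Sum>i\<in>I. \<Sum>i'\<in>I. w i * w i' * s i i' x) * (\<Sum>j\<in>J. \<Sum>j'\<in>J. a * u j * u j')"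
        by (simp add: sum_distrib_right)
      also have "(\<Sum>j\<in>J. \<Sum>j'\<in>J. a * u j * u j') = a"
        by (simp add: sum_distrib_left[symmetric] us)
      finally show ?thesis using bA x us cP cX cY by (simp add: a_def)
    next
      case (Inr y)
      then have y: "y \<in> Y" using xy by auto
      have "(\<Sum>z\<in>I \<times> J. \<Sum>z'\<in>I \<times> J. W z * W z' * S z z' xy)
        = (\<Sum>i\<in>I. \<Sum>j\<in>J. \<Sum>i'\<in>I. \<Sum>j'\<in>J. (u j * u j' * t j j' y) * (b * w i * w i'))"
        using Inr by (simp add: sum_prod_split W_def S_def algebra_simps)
      also have "\<dots> = (\<Sum>j\<in>J. \<Sum>i\<in>I. \<Sum>i'\<in>I. \<Sum>j'\<in>J. (u j * u j' * t j j' y) * (b * w i * w i'))"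
        by (rule sum.swap)
      also have "\<dots> = (\<Sum>j\<in>J. \<Sum>i\<in>I. \<Sum>j'\<in>J. \<Sum>i'\<in>I. (u j * u j' * t j j' y) * (b * w i * w i'))"
        by (intro sum.cong refl, rule sum.swap)
      also have "\<dots> = (\<Sum>j\<in>J. \<Sum>j'\<in>J. \<Sum>i\<in>I. \<Sum>i'\<in>I. (u j * u j' * t j j' y) * (b * w i * w i'))"
        by (intro sum.cong refl, rule sum.swap)
      also have "\<dots> = (\<Sum>j\<in>J. \<Sum>j'\<in>J. (u j * u j' * t j j' y) * (\<Sum>i\<in>I. \<Sum>i'\<in>I. b * w i * w i'))"
        by (simp add: sum_distrib_left)
      also have "\<dots> = (\<Sum>j\<in>J. \<Sum>j'\<in>J. u j * u j' * t j j' y) * (\<Sum>i\<in>I. \<Sum>i'\<in>I. b * w i * w i')"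
        by (simp add: sum_distrib_right)
      also have "(\<Sum>i\<in>I. \<Sum>i'\<in>I. b * w i * w i') = b"
        by (simp add: sum_distrib_left[symmetric] ws)
      finally show ?thesis using bB y ws cP cX cY by (simp add: b_def)
    qed
  qed
  show ?thesis unfolding gsys_def using c1 c2 c3 c4 c5 c6 unfolding S_def FF_def W_def by blast
qed

lemma k_min_add: assumes "a \<ge> 1" "b \<ge> 1" shows "k_min (a + b) \<le> k_min a + k_min b"
proof -
  obtain m F w s where A: "gsys {1..a} {1..m::nat} F w s (k_min a)" using k_min_gsys[OF assms(1)] by blast
  obtain m' G u t where B: "gsys {1..b} {1..m'::nat} G u t (k_min b)" using k_min_gsys[OF assms(2)] by blast
  have "good (card ({1..a} <+> {1..b})) (k_min a + k_min b)" by (rule gsys_good[OF gsys_sum[OF A B]])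
  then show ?thesis using good_k_min by (simp add: card_Plus)
qed

lemma gsys_trans:
  fixes X D :: "'x set" and pl :: "'x \<Rightarrow> 'x \<Rightarrow> 'x"
  assumes fX: "finite X" and DX: "D \<subseteq> X" and Dne: "D \<noteq> {}"
    and cl: "\<And>a b. a \<in> X \<Longrightarrow> b \<in> X \<Longrightarrow> pl a b \<in> X"
    and assoc: "\<And>a b c. a \<in> X \<Longrightarrow> b \<in> X \<Longrightarrow> c \<in> X \<Longrightarrow> pl (pl a b) c = pl a (pl b c)"
    and comm: "\<And>a b. a \<in> X \<Longrightarrow> b \<in> X \<Longrightarrow> pl a b = pl b a"
    and bij: "\<And>t. t \<in> X \<Longrightarrow> bij_betw (\<lambda>x. pl x t) X X"
    and tr: "\<And>z z'. z \<in> X \<Longrightarrow> z' \<in> X \<Longrightarrow> \<exists>t\<in>X. pl z t = z'"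
    and cover: "\<And>u. u \<in> X \<Longrightarrow> \<exists>a\<in>D. \<exists>b\<in>D. pl b u = a"
  defines "F \<equiv> (\<lambda>g. (\<lambda>d. pl d g) ` D)"
  shows "gsys X X F (\<lambda>_. 1 / card X) (\<lambda>g h z. if z \<in> F g \<inter> F h then 1 / card (F g \<inter> F h) else 0) (card D)"
proof -
  define s where "s = (\<lambda>g h z. if z \<in> F g \<inter> F h then 1 / real (card (F g \<inter> F h)) else 0)"
  have Xne: "X \<noteq> {}" using DX Dne by auto
  have cX: "card X > 0" using Xne fX by (simp add: card_gt_0_iff)
  have fD: "finite D" using DX fX by (rule finite_subset)
  have FX: "F g \<subseteq> X" if "g \<in> X" for g using cl DX that unfolding F_def by auto
  have fF: "finite (F g)" for g using fD unfolding F_def by auto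
  have meet: "F g \<inter> F h \<noteq> {}" if g: "g \<in> X" and h: "h \<in> X" for g h
  proof -
    obtain u where u: "u \<in> X" "pl g u = h" using tr[OF g h] by blast
    obtain a b where ab: "a \<in> D" "b \<in> D" "pl b u = a" using cover[OF u(1)] by blast
    have aX: "a \<in> X" and bX: "b \<in> X" using ab DX by auto
    have "pl a g = pl (pl b u) g" using ab by simp
    also have "\<dots> = pl b (pl u g)" using assoc bX u g by simp
    also have "\<dots> = pl b h" using comm u g by simp
    finally have "pl a g = pl b h" .
    moreover have "pl a g \<in> F g" using ab(1) unfolding F_def by blast
    moreover have "pl b h \<in> F h" using ab(2) unfolding F_def by blast
    ultimately have "pl a g \<in> F g \<inter> F h" by simp
    then show ?thesis by auto
  qed
  have c2: "\<forall>g\<in>X. F g \<subseteq> X \<and> card (F g) \<le> card D" using FX unfolding F_def by (auto intro: card_image_le fD)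
  have c4: "sum (\<lambda>_. 1 / real (card X)) X = 1" using cX by simp
  have c5: "\<forall>g\<in>X. \<forall>h\<in>X. (\<forall>x\<in>X. 0 \<le> s g h x) \<and> sum (s g h) X = 1 \<and> (\<forall>x\<in>X. s g h x > 0 \<longrightarrow> x \<in> F g \<inter> F h)"
  proof (intro ballI conjI)
    fix g h assume g: "g \<in> X" and h: "h \<in> X"
    show "0 \<le> s g h x" for x by (simp add: s_def)
    show "s g h x > 0 \<longrightarrow> x \<in> F g \<inter> F h" for x by (simp add: s_def)
    have sub: "F g \<inter> F h \<subseteq> X" using FX g by auto
    have ne: "card (F g \<inter> F h) > 0" using meet[OF g h] fF by (simp add: card_gt_0_iff)
    have "sum (s g h) X = (\<Sum>x\<in>X. if x \<in> F g \<inter> F h then 1 / real (card (F g \<inter> F h)) else 0)" by (simp add: s_def)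
    also have "\<dots> = real (card (X \<inter> (F g \<inter> F h))) * (1 / real (card (F g \<inter> F h)))"
      using fX by (simp add: sum.If_cases Int_def)
    also have "X \<inter> (F g \<inter> F h) = F g \<inter> F h" using sub by auto
    finally show "sum (s g h) X = 1" using ne by simp
  qed
  define \<Phi> where "\<Phi> = (\<lambda>z. \<Sum>g\<in>X. \<Sum>h\<in>X. s g h z)"
  have inv: "s (pl g t) (pl h t) (pl z t) = s g h z" if "g \<in> X" "h \<in> X" "z \<in> X" "t \<in> X" for g h z t
  proof -
    let ?\<tau> = "\<lambda>x. pl x t"
    have injt: "inj_on ?\<tau> X" using bij[OF that(4)] by (simp add: bij_betw_def)
    have Ft: "F (pl g' t) = ?\<tau> ` F g'" if "g' \<in> X" for g'
    proof -
      have "F (pl g' t) = (\<lambda>d. pl d (pl g' t)) ` D" by (simp add: F_def)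
      also have "\<dots> = (\<lambda>d. pl (pl d g') t) ` D" using assoc DX that \<open>t \<in> X\<close> by (intro image_cong) auto
      also have "\<dots> = ?\<tau> ` F g'" unfolding F_def by (simp add: image_image)
      finally show ?thesis .
    qed
    have I: "F (pl g t) \<inter> F (pl h t) = ?\<tau> ` (F g \<inter> F h)"
      using Ft[OF that(1)] Ft[OF that(2)] inj_on_image_Int[OF injt FX[OF that(1)] FX[OF that(2)]] by simp
    have mem: "pl z t \<in> ?\<tau> ` (F g \<inter> F h) \<longleftrightarrow> z \<in> F g \<inter> F h"
      using injt that FX by (auto simp: inj_on_def)
    have cd: "card (?\<tau> ` (F g \<inter> F h)) = card (F g \<inter> F h)"
      using injt FX[OF that(1)] by (intro card_image) (auto intro: inj_on_subset)
    show ?thesis unfolding s_def I using mem cd by simp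
  qed
  have const: "\<Phi> z' = \<Phi> z" if z: "z \<in> X" and z': "z' \<in> X" for z z'
  proof -
    obtain t where t: "t \<in> X" "pl z t = z'" using tr[OF z z'] by blast
    have bt: "bij_betw (\<lambda>x. pl x t) X X" using bij[OF t(1)] .
    have "\<Phi> z' = (\<Sum>g\<in>X. \<Sum>h\<in>X. s g h (pl z t))" using t by (simp add: \<Phi>_def)
    also have "\<dots> = (\<Sum>g\<in>X. \<Sum>h\<in>X. s (pl g t) (pl h t) (pl z t))"
    proof -
      have e1: "(\<Sum>x\<in>X. G (pl x t)) = sum G X" for G :: "'x \<Rightarrow> real" using sum.reindex_bij_betw[OF bt] .
      have "(\<Sum>g\<in>X. \<Sum>h\<in>X. s (pl g t) (pl h t) (pl z t)) = (\<Sum>g\<in>X. \<Sum>h\<in>X. s (pl g t) h (pl z t))"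
        by (rule sum.cong[OF refl], rule e1)
      also have "\<dots> = (\<Sum>g\<in>X. \<Sum>h\<in>X. s g h (pl z t))" using e1[of "\<lambda>g. \<Sum>h\<in>X. s g h (pl z t)"] by simp
      finally show ?thesis by simp
    qed
    also have "\<dots> = (\<Sum>g\<in>X. \<Sum>h\<in>X. s g h z)" using inv z t by (intro sum.cong refl) auto
    finally show ?thesis by (simp add: \<Phi>_def)
  qed
  obtain z0 where z0: "z0 \<in> X" using Xne by blast
  have "(\<Sum>z\<in>X. \<Phi> z) = (\<Sum>g\<in>X. \<Sum>h\<in>X. sum (s g h) X)" unfolding \<Phi>_def
  proof -
    have "(\<Sum>z\<in>X. \<Sum>g\<in>X. \<Sum>h\<in>X. s g h z) = (\<Sum>g\<in>X. \<Sum>z\<in>X. \<Sum>h\<in>X. s g h z)" by (rule sum.swap)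
    also have "\<dots> = (\<Sum>g\<in>X. \<Sum>h\<in>X. \<Sum>z\<in>X. s g h z)" by (rule sum.cong[OF refl], rule sum.swap)
    finally show "(\<Sum>z\<in>X. \<Sum>g\<in>X. \<Sum>h\<in>X. s g h z) = (\<Sum>g\<in>X. \<Sum>h\<in>X. sum (s g h) X)" by simp
  qed
  also have "\<dots> = real (card X) * real (card X)" using c5 by simp
  finally have tot: "(\<Sum>z\<in>X. \<Phi> z) = real (card X) * real (card X)" .
  have "(\<Sum>z\<in>X. \<Phi> z) = real (card X) * \<Phi> z0" using const[OF z0] by simp
  then have phi0: "\<Phi> z0 = real (card X)" using tot cX by simp
  have c6: "\<forall>x\<in>X. (\<Sum>i\<in>X. \<Sum>j\<in>X. (1 / real (card X)) * (1 / real (card X)) * s i j x) = 1 / real (card X)"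
  proof
    fix x assume x: "x \<in> X"
    have "(\<Sum>i\<in>X. \<Sum>j\<in>X. (1 / real (card X)) * (1 / real (card X)) * s i j x)
       = (1 / real (card X)) * (1 / real (card X)) * \<Phi> x" unfolding \<Phi>_def by (simp add: sum_distrib_left)
    also have "\<Phi> x = real (card X)" using const[OF z0 x] phi0 by simp
    finally show "(\<Sum>i\<in>X. \<Sum>j\<in>X. (1 / real (card X)) * (1 / real (card X)) * s i j x) = 1 / real (card X)"
      using cX by simp
  qed
  show ?thesis unfolding gsys_def using fX c2 c4 c5 c6 unfolding s_def by auto
qed

definition plm :: "nat \<Rightarrow> nat \<times> nat \<Rightarrow> nat \<times> nat \<Rightarrow> nat \<times> nat" where
  "plm m x y = ((fst x + fst y) mod m, (snd x + snd y) mod m)"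

lemma mod_inv_aux: "x < m \<Longrightarrow> t < m \<Longrightarrow> ((x + t) mod m + (m - t) mod m) mod m = (x::nat)"
proof -
  assume a: "x < m" "t < m"
  have "((x + t) mod m + (m - t) mod m) mod m = (x + t + (m - t)) mod m" by (simp add: mod_add_left_eq mod_add_right_eq)
  also have "x + t + (m - t) = x + m" using a by simp
  finally show ?thesis using a by simp
qed

lemma k_min_sq_cover:
  assumes m: "m \<ge> 1" and DX: "D \<subseteq> {0..<m} \<times> {0..<m}" and Dne: "D \<noteq> {}"
    and cover: "\<And>u. u \<in> {0..<m} \<times> {0..<m} \<Longrightarrow> \<exists>a\<in>D. \<exists>b\<in>D. plm m b u = a"
  shows "k_min (m * m) \<le> card D"
proof -
  let ?X = "{0..<m} \<times> {0..<m}"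
  have cl: "plm m a b \<in> ?X" if "a \<in> ?X" "b \<in> ?X" for a b using m by (auto simp: plm_def)
  have assoc: "plm m (plm m a b) c = plm m a (plm m b c)" for a b c
    by (simp add: plm_def mod_add_left_eq mod_add_right_eq add.assoc)
  have comm: "plm m a b = plm m b a" for a b by (simp add: plm_def add.commute)
  have bij: "bij_betw (\<lambda>x. plm m x t) ?X ?X" if t: "t \<in> ?X" for t
  proof (rule bij_betw_byWitness[where f'="\<lambda>x. plm m x ((m - fst t) mod m, (m - snd t) mod m)"])
    show "\<forall>a\<in>?X. plm m (plm m a t) ((m - fst t) mod m, (m - snd t) mod m) = a"
      using t by (auto simp: plm_def mod_inv_aux)
    show "\<forall>a\<in>?X. plm m (plm m a ((m - fst t) mod m, (m - snd t) mod m)) t = a"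
    proof
      fix a assume a: "a \<in> ?X"
      have e: "((x + (m - t') mod m) mod m + t') mod m = x" if "x < m" "t' < m" for x t' :: nat
      proof -
        have "((x + (m - t') mod m) mod m + t') mod m = (x + (m - t') + t') mod m" by (simp add: mod_add_left_eq mod_add_right_eq)
        also have "x + (m - t') + t' = x + m" using that by simp
        finally show ?thesis using that by simp
      qed
      show "plm m (plm m a ((m - fst t) mod m, (m - snd t) mod m)) t = a"
        using a t by (auto simp: plm_def e)
    qed
    show "(\<lambda>x. plm m x t) ` ?X \<subseteq> ?X" using m by (auto simp: plm_def)
    show "(\<lambda>x. plm m x ((m - fst t) mod m, (m - snd t) mod m)) ` ?X \<subseteq> ?X" using m by (auto simp: plm_def)
  qed
  have tr: "\<exists>t\<in>?X. plm m z t = z'" if z: "z \<in> ?X" and z': "z' \<in> ?X" for z z'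
  proof (intro bexI)
    show "((m + fst z' - fst z) mod m, (m + snd z' - snd z) mod m) \<in> ?X" using m by auto
    have e: "(x + (m + y - x) mod m) mod m = y" if "x < m" "y < m" for x y :: nat
    proof -
      have "(x + (m + y - x) mod m) mod m = (x + (m + y - x)) mod m" by (simp add: mod_add_right_eq)
      also have "x + (m + y - x) = y + m" using that by simp
      finally show ?thesis using that by simp
    qed
    show "plm m z ((m + fst z' - fst z) mod m, (m + snd z' - snd z) mod m) = z'"
      using z z' by (auto simp: plm_def e)
  qed
  have "gsys ?X ?X (\<lambda>g. (\<lambda>d. plm m d g) ` D) (\<lambda>_. 1 / card ?X)
     (\<lambda>g h z. if z \<in> (\<lambda>d. plm m d g) ` D \<inter> (\<lambda>d. plm m d h) ` D then 1 / card ((\<lambda>d. plm m d g) ` D \<inter> (\<lambda>d. plm m d h) ` D) else 0) (card D)"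
    by (rule gsys_trans[OF _ DX Dne cl assoc comm bij tr cover]) auto
  from gsys_good[OF this] have "good (m * m) (card D)" by simp
  then show ?thesis by (rule good_k_min)
qed

lemma k_min_sq_cross: assumes m: "m \<ge> 1" shows "k_min (m * m) \<le> 2 * m"
proof -
  define D where "D = (\<lambda>x. (x, 0::nat)) ` {0..<m} \<union> (\<lambda>y. (0::nat, y)) ` {0..<m}"
  have DX: "D \<subseteq> {0..<m} \<times> {0..<m}" using m by (auto simp: D_def)
  have Dne: "D \<noteq> {}" using m by (auto simp: D_def)
  have cover: "\<exists>a\<in>D. \<exists>b\<in>D. plm m b u = a" if u: "u \<in> {0..<m} \<times> {0..<m}" for u
  proof -
    have "(fst u, 0) \<in> D" "(0, (m - snd u) mod m) \<in> D" using u m by (auto simp: D_def)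
    moreover have "plm m (0, (m - snd u) mod m) u = (fst u, 0)"
    proof -
      have "((m - snd u) mod m + snd u) mod m = (m - snd u + snd u) mod m" by (simp add: mod_add_left_eq)
      also have "m - snd u + snd u = m" using u by auto
      finally show ?thesis using u by (auto simp: plm_def)
    qed
    ultimately show ?thesis by blast
  qed
  have "card D \<le> card ((\<lambda>x. (x, 0::nat)) ` {0..<m}) + card ((\<lambda>y. (0::nat, y)) ` {0..<m})"
    unfolding D_def by (rule card_Un_le)
  also have "\<dots> \<le> m + m" by (intro add_mono) (auto intro: card_image_le[THEN le_trans])
  finally have "card D \<le> 2 * m" by simp
  with k_min_sq_cover[OF m DX Dne cover] show ?thesis by simp
qed

lemma k_min_crude: assumes r: "r \<ge> 1" shows "real (k_min r) \<le> 4 * sqrt (real r)"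
proof -
  define t where "t = nat \<lfloor>sqrt (real r)\<rfloor>"
  have ft: "real t = of_int \<lfloor>sqrt (real r)\<rfloor>" unfolding t_def by simp
  have t1: "real t \<le> sqrt (real r)" "sqrt (real r) < real t + 1" unfolding ft by linarith+
  have "real t * real t \<le> sqrt (real r) * sqrt (real r)" using t1(1) by (intro mult_mono) auto
  then have "real (t * t) \<le> real r" by simp
  then have tt: "t * t \<le> r" by linarith
  have "sqrt (real r) * sqrt (real r) < (real t + 1) * (real t + 1)" using t1 by (intro mult_strict_mono) auto
  then have "real r < (real t + 1) * (real t + 1)" by simp
  then have "real r < real ((t + 1) * (t + 1))" by (simp add: algebra_simps)
  then have "r < (t + 1) * (t + 1)" by (simp only: of_nat_less_iff)
  then have rs: "r - t * t \<le> 2 * t" by (simp add: algebra_simps)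
  have "sqrt (real r) \<ge> 1" using r by simp
  then have "1 \<le> \<lfloor>sqrt (real r)\<rfloor>" by (simp add: le_floor_iff)
  then have "real t \<ge> 1" unfolding ft by linarith
  then have t0: "t \<ge> 1" by simp
  show ?thesis
  proof (cases "r = t * t")
    case True
    then have "k_min r \<le> 2 * t" using k_min_sq_cross[OF t0] by simp
    then have "real (k_min r) \<le> 2 * real t" by linarith
    also have "\<dots> \<le> 4 * sqrt (real r)" using t1 by simp
    finally show ?thesis .
  next
    case False
    then have s1: "r - t * t \<ge> 1" using tt by simp
    have tt1: "t * t \<ge> 1" using t0 by simp
    have "k_min r = k_min (t * t + (r - t * t))" using tt by simp
    also have "\<dots> \<le> k_min (t * t) + k_min (r - t * t)" by (rule k_min_add[OF tt1 s1])
    also have "\<dots> \<le> 2 * t + (r - t * t)" using k_min_sq_cross[OF t0] k_min_le[OF s1] by simp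
    also have "\<dots> \<le> 4 * t" using rs by simp
    finally have "real (k_min r) \<le> 4 * real t" by linarith
    also have "\<dots> \<le> 4 * sqrt (real r)" using t1 by simp
    finally show ?thesis .
  qed
qed

lemma k_min_prime_sq:
  assumes p: "prime p" "p > 2"
  shows "real (k_min (p * p)) \<le> real p + 2 * sqrt (real p) + 3"
proof -
  define t where "t = nat \<lceil>sqrt (real p)\<rceil>"
  have p1: "p \<ge> 1" using p by simp
  have ft: "real t = of_int \<lceil>sqrt (real p)\<rceil>" unfolding t_def by simp
  have t1: "sqrt (real p) \<le> real t" "real t < sqrt (real p) + 1" unfolding ft by linarith+
  have "sqrt (real p) * sqrt (real p) \<le> real t * real t" using t1(1) by (intro mult_mono) auto
  then have "real p \<le> real (t * t)" by simp
  then have ttp: "p \<le> t * t" by (simp only: of_nat_le_iff)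
  have t0: "t \<ge> 1" using ttp p1 by (cases t) auto
  have tp: "t \<le> p"
  proof -
    have s1: "sqrt (real p) \<ge> 1" using p1 by simp
    have "sqrt (real p) * 1 \<le> sqrt (real p) * sqrt (real p)" by (rule mult_left_mono[OF s1]) simp
    moreover have "sqrt (real p) * sqrt (real p) = real p" by simp
    ultimately have "sqrt (real p) \<le> real p" by linarith
    then show ?thesis unfolding t_def by (simp add: nat_le_iff ceiling_le_iff)
  qed
  define E where "E = {0..<t} \<union> (\<lambda>j. (t * j) mod p) ` {0..t}"
  define P where "P = (\<lambda>x. (x, (x * x) mod p)) ` {0..<p}"
  define Q where "Q = (\<lambda>e. (0::nat, e)) ` E"
  define D where "D = P \<union> Q"
  have EX: "E \<subseteq> {0..<p}" using tp p1 by (auto simp: E_def)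
  have DX: "D \<subseteq> {0..<p} \<times> {0..<p}" using EX p1 by (auto simp: D_def P_def Q_def)
  have Dne: "D \<noteq> {}" using p1 by (auto simp: D_def P_def)
  have cover: "\<exists>a\<in>D. \<exists>b\<in>D. plm p b u = a" if u: "u \<in> {0..<p} \<times> {0..<p}" for u
  proof -
    obtain u1 u2 where uu: "u = (u1, u2)" "u1 < p" "u2 < p" using u by auto
    show ?thesis
    proof (cases "u1 = 0")
      case True
      define j where "j = (u2 + t - 1) div t"
      have tj1: "t * j \<le> u2 + t - 1" unfolding j_def by (rule times_div_less_eq_dividend)
      have tj2: "u2 \<le> t * j"
      proof -
        have "u2 + t - 1 = t * j + (u2 + t - 1) mod t" unfolding j_def by simp
        moreover have "(u2 + t - 1) mod t < t" using t0 by simp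
        ultimately show ?thesis by linarith
      qed
      have jt: "j \<le> t"
      proof -
        have "u2 + t - 1 < t * t + t" using uu ttp by linarith
        then have "(u2 + t - 1) div t < t + 1" using t0 by (simp add: div_less_iff_less_mult algebra_simps)
        then show ?thesis unfolding j_def by simp
      qed
      define e' where "e' = t * j - u2"
      have e't: "e' < t" using tj1 tj2 t0 unfolding e'_def by linarith
      have bD: "(0, e') \<in> D" using e't unfolding D_def Q_def E_def by auto
      have aD: "(0, (t * j) mod p) \<in> D" using jt unfolding D_def Q_def E_def by auto
      have "plm p (0, e') u = (0, (t * j) mod p)" using True uu tj2 by (simp add: plm_def e'_def)
      then show ?thesis using aD bD by blast
    next
      case False
      define \<phi> where "\<phi> = (\<lambda>y. (2 * u1 * y + u1 * u1) mod p)"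
      have cop: "coprime (2 * u1) p"
      proof -
        have "\<not> p dvd 2" using p by (auto dest: dvd_imp_le)
        moreover have "\<not> p dvd u1" using False uu by (auto dest: dvd_imp_le)
        ultimately have "\<not> p dvd 2 * u1" using p by (simp add: prime_dvd_mult_iff)
        then have "coprime p (2 * u1)" by (rule prime_imp_coprime[OF p(1)])
        then show ?thesis by (simp only: coprime_commute)
      qed
      have inj: "inj_on \<phi> {0..<p}"
      proof (rule inj_onI)
        fix y y' assume y: "y \<in> {0..<p}" "y' \<in> {0..<p}" and e: "\<phi> y = \<phi> y'"
        have "Cong.cong (2 * u1 * y + u1 * u1) (2 * u1 * y' + u1 * u1) p" using e unfolding Cong.cong_def \<phi>_def by simp
        then have "Cong.cong (2 * u1 * y) (2 * u1 * y') p" by (simp add: cong_add_rcancel_nat)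
        then have "Cong.cong y y' p" using cong_mult_lcancel_nat[OF cop] by simp
        then show "y = y'" using y by (auto intro: cong_less_modulus_unique_nat)
      qed
      have "\<phi> ` {0..<p} = {0..<p}" by (rule endo_inj_surj) (use inj p1 in \<open>auto simp: \<phi>_def\<close>)
      then obtain y where y: "y < p" "\<phi> y = u2" using uu by (metis atLeastLessThan_iff imageE zero_le)
      define y1 where "y1 = (y + u1) mod p"
      have bD: "(y, (y * y) mod p) \<in> D" using y unfolding D_def P_def by auto
      have aD: "(y1, (y1 * y1) mod p) \<in> D" using p1 unfolding D_def P_def y1_def by auto
      have "((y * y) mod p + u2) mod p = (y1 * y1) mod p"
      proof -
        have "((y * y) mod p + u2) mod p = (y * y + (2 * u1 * y + u1 * u1) mod p) mod p"
          using y by (simp add: \<phi>_def mod_add_left_eq)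
        also have "\<dots> = (y * y + (2 * u1 * y + u1 * u1)) mod p" by (simp add: mod_add_right_eq)
        also have "y * y + (2 * u1 * y + u1 * u1) = (y + u1) * (y + u1)" by (simp add: algebra_simps)
        also have "((y + u1) * (y + u1)) mod p = (y1 * y1) mod p" unfolding y1_def by (simp add: mod_mult_eq)
        finally show ?thesis .
      qed
      then have "plm p (y, (y * y) mod p) u = (y1, (y1 * y1) mod p)" using uu by (simp add: plm_def y1_def)
      then show ?thesis using aD bD by blast
    qed
  qed
  have k1: "k_min (p * p) \<le> card D" by (rule k_min_sq_cover[OF p1 DX Dne cover])
  have "card D \<le> card P + card Q" unfolding D_def by (rule card_Un_le)
  also have "card P \<le> p" unfolding P_def by (rule card_image_le[THEN le_trans]) auto
  also have "card Q \<le> card E" unfolding Q_def by (rule card_image_le) (simp add: E_def)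
  also have "card E \<le> card {0..<t} + card ((\<lambda>j. (t * j) mod p) ` {0..t})" unfolding E_def by (rule card_Un_le)
  also have "card ((\<lambda>j. (t * j) mod p) ` {0..t}) \<le> t + 1" by (rule card_image_le[THEN le_trans]) auto
  finally have "card D \<le> p + 2 * t + 1" by simp
  then have "real (k_min (p * p)) \<le> real p + 2 * real t + 1" using k1 by linarith
  also have "\<dots> \<le> real p + 2 * sqrt (real p) + 3" using t1 by linarith
  finally show ?thesis .
qed

definition psi :: "nat \<Rightarrow> real" where "psi N = (\<Sum>d=1..N. mangoldt d)"

lemma psi_mono: "M \<le> N \<Longrightarrow> psi M \<le> psi N"
  unfolding psi_def by (intro sum_mono2) (auto simp: mangoldt_nonneg)

lemma ln_fact_mangoldt: "ln (fact n) = (\<Sum>d=1..n. mangoldt d * real (n div d))"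
proof (induction n)
  case 0 then show ?case by simp
next
  case (Suc n)
  have split: "real (Suc n div d) = real (n div d) + (if d dvd Suc n then 1 else 0)" for d
    by (simp add: div_Suc dvd_eq_mod_eq_0)
  have "(\<Sum>d=1..Suc n. mangoldt d * real (Suc n div d))
      = (\<Sum>d=1..Suc n. mangoldt d * real (n div d)) + (\<Sum>d=1..Suc n. if d dvd Suc n then mangoldt d else 0)"
    by (subst sum.distrib[symmetric], rule sum.cong, simp, simp add: split algebra_simps)
  also have "(\<Sum>d=1..Suc n. mangoldt d * real (n div d)) = (\<Sum>d=1..n. mangoldt d * real (n div d))"
    by simp
  also have "(\<Sum>d=1..Suc n. if d dvd Suc n then mangoldt d else 0) = (\<Sum>d | d dvd Suc n. mangoldt d)"
  proof -
    have "(\<Sum>d=1..Suc n. if d dvd Suc n then mangoldt d else 0) = (\<Sum>d\<in>{x\<in>{1..Suc n}. x dvd Suc n}. mangoldt d)"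
      by (rule sum.inter_filter[symmetric]) simp
    also have "{x\<in>{1..Suc n}. x dvd Suc n} = {d. d dvd Suc n}"
      by (auto dest: dvd_imp_le intro: Suc_leI dvd_pos_nat[of "Suc n"])
    finally show ?thesis .
  qed
  also have "\<dots> = ln (real (Suc n))" using mangoldt_sum[of "Suc n", where 'a=real] by simp
  finally show ?case using Suc.IH by (simp add: ln_mult)
qed

lemma div_bracket: "2 * (n div d) \<le> (2 * n) div d \<and> (2 * n) div d \<le> 2 * (n div d) + 1" for n d :: nat
proof (cases "d = 0")
  case True then show ?thesis by simp
next
  case False
  have e: "(2 * n) div d = n div d + n div d + (n mod d + n mod d) div d"
    using div_add1_eq[of n n d] by (simp add: mult_2)
  have "(n mod d + n mod d) div d \<le> 1"
  proof -
    have "n mod d + n mod d < 2 * d" using mod_less_divisor[of d n] False by linarith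
    then have "(n mod d + n mod d) div d < 2" using False by (simp add: div_less_iff_less_mult)
    then show ?thesis by simp
  qed
  then show ?thesis using e by simp
qed

lemma ln_binom_mangoldt:
  "ln (real ((2 * n) choose n)) = (\<Sum>d=1..2*n. mangoldt d * (real ((2 * n) div d) - 2 * real (n div d)))"
proof -
  have f: "fact (2 * n) = fact n * fact n * ((2 * n) choose n)"
    using binomial_fact_lemma[of n "2 * n"] by simp
  have pos: "real ((2 * n) choose n) > 0" by simp
  have "ln (fact (2 * n) :: real) = ln (fact n) + ln (fact n) + ln (real ((2 * n) choose n))"
  proof -
    have "(fact (2 * n) :: real) = fact n * fact n * real ((2 * n) choose n)"
      using arg_cong[OF f, of real] by simp
    then show ?thesis using pos by (simp add: ln_mult)
  qed
  moreover have "(\<Sum>d=1..n. mangoldt d * real (n div d)) = (\<Sum>d=1..2*n. mangoldt d * real (n div d))"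
    by (rule sum.mono_neutral_left) auto
  ultimately have "ln (real ((2 * n) choose n)) = (\<Sum>d=1..2*n. mangoldt d * real ((2*n) div d)) - 2 * (\<Sum>d=1..2*n. mangoldt d * real (n div d))"
    using ln_fact_mangoldt[of "2*n"] ln_fact_mangoldt[of n] by simp
  also have "\<dots> = (\<Sum>d=1..2*n. mangoldt d * (real ((2 * n) div d) - 2 * real (n div d)))"
    by (simp add: sum_distrib_left sum_subtractf algebra_simps)
  finally show ?thesis .
qed

lemma psi_diff_upper: "psi (2 * n) - psi n \<le> real n * ln 4"
proof -
  have "psi (2 * n) - psi n = (\<Sum>d\<in>{n<..2*n}. mangoldt d)"
  proof -
    have "{1..2*n} = {1..n} \<union> {n<..2*n}" by auto
    then have "psi (2 * n) = psi n + (\<Sum>d\<in>{n<..2*n}. mangoldt d)"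
      unfolding psi_def by (simp add: sum.union_disjoint[symmetric] ivl_disj_int)
    then show ?thesis by simp
  qed
  also have "\<dots> \<le> (\<Sum>d=1..2*n. mangoldt d * (real ((2 * n) div d) - 2 * real (n div d)))"
  proof -
    have "(\<Sum>d\<in>{n<..2*n}. mangoldt d) = (\<Sum>d\<in>{n<..2*n}. mangoldt d * (real ((2 * n) div d) - 2 * real (n div d)))"
    proof (intro sum.cong refl)
      fix d assume d: "d \<in> {n<..2*n}"
      then have "(2 * n) div d = 1" by (auto intro: div_nat_eqI)
      moreover have "n div d = 0" using d by auto
      ultimately show "mangoldt d = mangoldt d * (real ((2 * n) div d) - 2 * real (n div d))" by simp
    qed
    also have "\<dots> \<le> (\<Sum>d=1..2*n. mangoldt d * (real ((2 * n) div d) - 2 * real (n div d)))"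
    proof (rule sum_mono2)
      show "{n<..2 * n} \<subseteq> {1..2 * n}" by auto
      fix d assume "d \<in> {1..2 * n} - {n<..2 * n}"
      have "2 * real (n div d) \<le> real ((2 * n) div d)" using div_bracket[of n d] by linarith
      then show "0 \<le> mangoldt d * (real ((2 * n) div d) - 2 * real (n div d))"
        by (intro mult_nonneg_nonneg mangoldt_nonneg) simp
    qed simp
    finally show ?thesis .
  qed
  also have "\<dots> = ln (real ((2 * n) choose n))" by (rule ln_binom_mangoldt[symmetric])
  also have "\<dots> \<le> ln (4 ^ n)"
  proof -
    have "(2 * n) choose n \<le> 2 ^ (2 * n)" by (rule binomial_le_pow2)
    then have "real ((2 * n) choose n) \<le> 4 ^ n" by (simp add: power_mult)
    then show ?thesis by (simp add: ln_le_cancel_iff)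
  qed
  also have "\<dots> = real n * ln 4" by (simp add: ln_realpow)
  finally show ?thesis .
qed

lemma psi_lower: assumes "n \<ge> 1" shows "real n * ln 4 - ln (2 * real n) \<le> psi (2 * n)"
proof -
  have "real n * ln 4 - ln (2 * real n) = ln (4 ^ n / (2 * real n))"
    using assms by (simp add: ln_div ln_realpow)
  also have "\<dots> \<le> ln (real ((2 * n) choose n))"
    using central_binomial_lower_bound[of n] assms by (subst ln_le_cancel_iff) auto
  also have "\<dots> = (\<Sum>d=1..2*n. mangoldt d * (real ((2 * n) div d) - 2 * real (n div d)))"
    by (rule ln_binom_mangoldt)
  also have "\<dots> \<le> psi (2 * n)" unfolding psi_def
  proof (rule sum_mono)
    fix d
    have "real ((2 * n) div d) - 2 * real (n div d) \<le> 1" using div_bracket[of n d] by linarith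
    then show "mangoldt d * (real ((2 * n) div d) - 2 * real (n div d)) \<le> mangoldt d"
      using mangoldt_nonneg[of d] by (simp add: mult_left_le)
  qed
  finally show ?thesis .
qed

lemma psi_upper: "psi N \<le> 2 * ln 4 * real N"
proof (induction N rule: less_induct)
  case (less N)
  have l4: "ln (4::real) > 0" by simp
  consider "N = 0" | "N = 1" | n where "N = 2 * n" "n \<ge> 1" | n where "N = 2 * n + 1" "n \<ge> 1"
    by (metis One_nat_def add_0 mult_0_right not_less_eq_eq oddE evenE Suc_leI zero_less_iff_neq_zero)
  then show ?case
  proof cases
    case 1 then show ?thesis by (simp add: psi_def)
  next
    case 2 then show ?thesis by (simp add: psi_def)
  next
    case (3 n)
    have "psi N \<le> psi n + real n * ln 4" using psi_diff_upper[of n] 3 by simp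
    also have "psi n \<le> 2 * ln 4 * real n" using less.IH[of n] 3 by simp
    finally have a: "psi N \<le> 2 * ln 4 * real n + real n * ln 4" by simp
    have "0 \<le> real n * ln 4" using l4 by simp
    moreover have "2 * ln 4 * real N = 2 * ln 4 * real n + real n * ln 4 + real n * ln 4" using 3 by (simp add: algebra_simps)
    ultimately show ?thesis using a by linarith
  next
    case (4 n)
    have "psi N \<le> psi (2 * (n + 1))" using 4 by (intro psi_mono) simp
    also have "\<dots> \<le> psi (n + 1) + real (n + 1) * ln 4" using psi_diff_upper[of "n + 1"] by simp
    also have "psi (n + 1) \<le> 2 * ln 4 * real (n + 1)" using less.IH[of "n+1"] 4 by simp
    finally have "psi N \<le> 3 * ln 4 * real (n + 1)" by (simp add: algebra_simps)
    also have "\<dots> \<le> 2 * ln 4 * real N" using 4 l4 by (simp add: algebra_simps)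
    finally show ?thesis .
  qed
qed

lemma proper_pp_card:
  assumes N: "N \<ge> 1"
  shows "real (card {d\<in>{1..N}. primepow d \<and> \<not> prime d}) \<le> sqrt (real N) * log 2 (real N)"
proof -
  define s where "s = nat \<lfloor>sqrt (real N)\<rfloor>"
  define K where "K = nat \<lfloor>log 2 (real N)\<rfloor>"
  have sub: "{d\<in>{1..N}. primepow d \<and> \<not> prime d} \<subseteq> (\<lambda>(a,k). a ^ k) ` ({1..s} \<times> {2..K})"
  proof
    fix d assume d: "d \<in> {d\<in>{1..N}. primepow d \<and> \<not> prime d}"
    then obtain p k where pk: "prime p" "k > 0" "d = p ^ k" unfolding primepow_def by auto
    have k2: "k \<ge> 2" using pk d by (cases "k = 1") auto
    have p2: "p \<ge> 2" using pk prime_ge_2_nat by auto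
    have "p ^ 2 \<le> p ^ k" using k2 p2 by (intro power_increasing) auto
    then have "p ^ 2 \<le> N" using d pk by auto
    then have "real p * real p \<le> real N" by (metis of_nat_le_iff of_nat_mult power2_eq_square)
    then have "real p \<le> sqrt (real N)" by (metis of_nat_0_le_iff real_le_rsqrt power2_eq_square)
    then have ps: "p \<le> s" unfolding s_def by (simp add: le_nat_floor)
    have "2 ^ k \<le> p ^ k" using p2 by (intro power_mono) auto
    moreover have "p ^ k \<le> N" using d pk by auto
    ultimately have "2 ^ k \<le> N" by (rule le_trans)
    then have "real (2 ^ k) \<le> real N" by (simp only: of_nat_le_iff)
    then have "(2::real) ^ k \<le> real N" by simp
    then have "real k \<le> log 2 (real N)" using N by (simp add: le_log_iff powr_realpow)
    then have kK: "k \<le> K" unfolding K_def by (simp add: le_nat_floor)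
    show "d \<in> (\<lambda>(a,k). a ^ k) ` ({1..s} \<times> {2..K})"
      using ps kK k2 p2 pk by (auto intro!: image_eqI[where x="(p,k)"])
  qed
  have "card {d\<in>{1..N}. primepow d \<and> \<not> prime d} \<le> card ((\<lambda>(a,k). a ^ k) ` ({1..s} \<times> {2..K}))"
    by (rule card_mono[OF _ sub]) auto
  also have "\<dots> \<le> card ({1..s} \<times> {2..K})" by (rule card_image_le) auto
  also have "\<dots> = s * (K - 1)" by (simp add: card_cartesian_product)
  also have "\<dots> \<le> s * K" by simp
  finally have c: "real (card {d\<in>{1..N}. primepow d \<and> \<not> prime d}) \<le> real s * real K" by (simp only: of_nat_le_iff of_nat_mult[symmetric])
  have "real s \<le> sqrt (real N)" unfolding s_def by simp
  moreover have "real K \<le> log 2 (real N)"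
  proof -
    have "log 2 (real N) \<ge> 0" using N by simp
    then show ?thesis unfolding K_def by simp
  qed
  ultimately have "real s * real K \<le> sqrt (real N) * log 2 (real N)" by (intro mult_mono) auto
  with c show ?thesis by linarith
qed

definition primes_in :: "nat \<Rightarrow> nat set" where "primes_in x = {p\<in>{x<..6*x}. prime p}"

lemma primes_in_count:
  assumes x: "x \<ge> 1"
  shows "(real x * ln 4 - ln (6 * real x)) / ln (6 * real x) - sqrt (6 * real x) * log 2 (6 * real x) \<le> real (card (primes_in x))"
proof -
  define N where "N = 6 * x"
  have N1: "N \<ge> 1" using x by (simp add: N_def)
  have lN: "ln (real N) > 0" using x by (simp add: N_def)
  have "3 * x \<ge> 1" using x by simp
  from psi_lower[OF this] have l: "real (3 * x) * ln 4 - ln (2 * real (3 * x)) \<le> psi N" by (simp add: N_def)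
  have u: "psi x \<le> 2 * ln 4 * real x" by (rule psi_upper)
  have "real x * ln 4 - ln (real N) \<le> psi N - psi x" using l u by (simp add: N_def algebra_simps)
  also have "psi N - psi x = (\<Sum>d\<in>{x<..N}. mangoldt d)"
  proof -
    have "{1..N} = {1..x} \<union> {x<..N}" using x by (auto simp: N_def)
    then have "psi N = psi x + (\<Sum>d\<in>{x<..N}. mangoldt d)"
      unfolding psi_def by (simp add: sum.union_disjoint[symmetric] ivl_disj_int)
    then show ?thesis by simp
  qed
  also have "\<dots> \<le> (\<Sum>d\<in>{x<..N}. if primepow d then ln (real N) else 0)"
  proof (rule sum_mono)
    fix d assume d: "d \<in> {x<..N}"
    show "mangoldt d \<le> (if primepow d then ln (real N) else 0)"
    proof (cases "primepow d")
      case True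
      have "mangoldt d \<le> ln (real d)" using d by (intro mangoldt_le) auto
      also have "\<dots> \<le> ln (real N)" using d by auto
      finally show ?thesis using True by simp
    qed (simp add: mangoldt_def)
  qed
  also have "\<dots> = ln (real N) * real (card {d\<in>{x<..N}. primepow d})"
    by (simp add: sum.If_cases Int_def)
  also have "card {d\<in>{x<..N}. primepow d} \<le> card (primes_in x) + card {d\<in>{1..N}. primepow d \<and> \<not> prime d}"
  proof -
    have "{d\<in>{x<..N}. primepow d} \<subseteq> primes_in x \<union> {d\<in>{1..N}. primepow d \<and> \<not> prime d}"
      by (auto simp: primes_in_def N_def)
    then have "card {d\<in>{x<..N}. primepow d} \<le> card (primes_in x \<union> {d\<in>{1..N}. primepow d \<and> \<not> prime d})"
      by (intro card_mono) (auto simp: primes_in_def)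
    also have "\<dots> \<le> card (primes_in x) + card {d\<in>{1..N}. primepow d \<and> \<not> prime d}" by (rule card_Un_le)
    finally show ?thesis .
  qed
  finally have "real x * ln 4 - ln (real N) \<le> ln (real N) * (real (card (primes_in x)) + real (card {d\<in>{1..N}. primepow d \<and> \<not> prime d}))"
    using lN by (simp add: mult_left_mono)
  also have "\<dots> \<le> ln (real N) * (real (card (primes_in x)) + sqrt (real N) * log 2 (real N))"
    using proper_pp_card[OF N1] lN by (intro mult_left_mono) auto
  finally have "(real x * ln 4 - ln (real N)) / ln (real N) \<le> real (card (primes_in x)) + sqrt (real N) * log 2 (real N)"
    using lN by (simp add: divide_le_eq mult.commute)
  then show ?thesis by (simp add: N_def)
qed

lemma div_eq_diff_lt: assumes "(a::nat) div b = c div b" "a \<le> c" "b > 0" shows "c - a < b"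
proof -
  have "c = b * (c div b) + c mod b" "a = b * (a div b) + a mod b" by simp_all
  then have "c - a = c mod b - a mod b" using assms(1) by (metis add_diff_cancel_left)
  also have "\<dots> \<le> c mod b" by simp
  also have "\<dots> < b" using assms(3) by simp
  finally show ?thesis .
qed

lemma real_nat_floor: assumes "0 \<le> (y::real)" shows "real (nat \<lfloor>y\<rfloor>) \<le> y" "y - 1 < real (nat \<lfloor>y\<rfloor>)"
proof -
  have "0 \<le> \<lfloor>y\<rfloor>" using assms by simp
  then have e: "real (nat \<lfloor>y\<rfloor>) = of_int \<lfloor>y\<rfloor>" by simp
  show "real (nat \<lfloor>y\<rfloor>) \<le> y" "y - 1 < real (nat \<lfloor>y\<rfloor>)" unfolding e by linarith+
qed

lemma real_nat_ceil: assumes "0 \<le> (y::real)" shows "y \<le> real (nat \<lceil>y\<rceil>)" "real (nat \<lceil>y\<rceil>) < y + 1"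
proof -
  have "0 \<le> \<lceil>y\<rceil>" using assms by linarith
  then have e: "real (nat \<lceil>y\<rceil>) = of_int \<lceil>y\<rceil>" by simp
  show "y \<le> real (nat \<lceil>y\<rceil>)" "real (nat \<lceil>y\<rceil>) < y + 1" unfolding e by linarith+
qed

lemma pair_ev: "eventually (\<lambda>x::real. (x powr 0.6 + 1) * (5 * x / (x powr 0.9 - 1) + 1) < (x * ln 4 - ln (6 * x)) / ln (6 * x) - sqrt (6 * x) * log 2 (6 * x)) at_top"
  by real_asymp

lemma pair_exists:
  "\<exists>X0. \<forall>x\<ge>X0. \<exists>p q. prime p \<and> prime q \<and> x < p \<and> p < q \<and> q \<le> 6 * x \<and>
      real x powr 0.6 \<le> real q - real p \<and> real q - real p \<le> real x powr 0.9"
proof -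
  obtain X1 where X1: "\<And>y. y \<ge> X1 \<Longrightarrow> (y powr 0.6 + 1) * (5 * y / (y powr 0.9 - 1) + 1) < (y * ln 4 - ln (6 * y)) / ln (6 * y) - sqrt (6 * y) * log 2 (6 * y)"
    using pair_ev unfolding eventually_at_top_linorder by blast
  define X0 where "X0 = max 2 (nat \<lceil>X1\<rceil>)"
  show ?thesis
  proof (rule exI[of _ X0], intro allI impI)
    fix x assume x: "X0 \<le> x"
    have x2: "x \<ge> 2" using x by (simp add: X0_def)
    have xX1: "real x \<ge> X1" using x unfolding X0_def by linarith
    show "\<exists>p q. prime p \<and> prime q \<and> x < p \<and> p < q \<and> q \<le> 6 * x \<and>
      real x powr 0.6 \<le> real q - real p \<and> real q - real p \<le> real x powr 0.9"
    proof (rule ccontr)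
      assume nopair: "\<not> ?thesis"
      define S where "S = primes_in x"
      define a where "a = nat \<lceil>real x powr 0.6\<rceil>"
      define b where "b = nat \<lfloor>real x powr 0.9\<rfloor>"
      have x1r: "real x \<ge> 2" using x2 by simp
      have xp9: "real x powr 0.9 \<ge> 2 powr 0.9" using x1r by (intro powr_mono2) auto
      have "2 powr (0::real) < 2 powr (0.9::real)" by (rule powr_less_mono) auto
      then have "2 powr (0.9::real) > 1" by simp
      then have xp9': "real x powr 0.9 > 1" using xp9 by linarith
      have b1: "b \<ge> 1" unfolding b_def using xp9' by (simp add: le_nat_floor)
      have "real x powr 0.6 > 0" using x2 by simp
      moreover have "real a \<ge> real x powr 0.6" unfolding a_def by (rule real_nat_ceil) simp
      ultimately have "real a > 0" by linarith
      then have a1: "a \<ge> 1" by simp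
      have np: "\<not> (a \<le> q - p \<and> q - p \<le> b)" if "p \<in> S" "q \<in> S" "p < q" for p q
      proof
        assume h: "a \<le> q - p \<and> q - p \<le> b"
        have "real x powr 0.6 \<le> real (q - p)" using h unfolding a_def by (simp add: nat_le_iff ceiling_le_iff)
        moreover have "real (q - p) \<le> real x powr 0.9"
        proof -
          have "real (q - p) \<le> real b" using h by simp
          moreover have "real b \<le> real x powr 0.9" unfolding b_def by (rule real_nat_floor) simp
          ultimately show ?thesis by linarith
        qed
        ultimately show False using nopair that unfolding S_def primes_in_def by (auto simp: of_nat_diff)
      qed
      define i where "i = (\<lambda>p. (p - x - 1) div b)"
      define M where "M = 5 * x div b + 1"
      have SU: "S \<subseteq> (\<Union>k\<in>{..<M}. {p\<in>S. i p = k})"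
      proof
        fix p assume p: "p \<in> S"
        then have "p - x - 1 \<le> 5 * x" unfolding S_def primes_in_def by auto
        then have "i p \<le> 5 * x div b" unfolding i_def by (rule div_le_mono)
        then show "p \<in> (\<Union>k\<in>{..<M}. {p\<in>S. i p = k})" using p unfolding M_def by auto
      qed
      have fS: "finite S" unfolding S_def primes_in_def by auto
      have blk: "card {p\<in>S. i p = k} \<le> a" for k
      proof (cases "{p\<in>S. i p = k} = {}")
        case True then show ?thesis by (simp only: card.empty)
      next
        case False
        define T where "T = {p\<in>S. i p = k}"
        have fT: "finite T" using fS unfolding T_def by auto
        define m where "m = Min T"
        have mT: "m \<in> T" using False fT unfolding m_def T_def by (intro Min_in) auto
        have "T \<subseteq> {m..<m + a}"
        proof
          fix q assume q: "q \<in> T"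
          have mq: "m \<le> q" using q fT unfolding m_def by simp
          show "q \<in> {m..<m + a}"
          proof (cases "q = m")
            case True then show ?thesis using a1 by simp
          next
            case False
            then have mlq: "m < q" using mq by simp
            have xm: "x < m" "x < q" using mT q unfolding T_def S_def primes_in_def by auto
            have "i m = i q" using mT q unfolding T_def by simp
            then have "(q - x - 1) - (m - x - 1) < b" unfolding i_def
              by (intro div_eq_diff_lt) (use mlq b1 in auto)
            then have "q - m < b" using xm mlq by simp
            then have "q - m < a" using np[of m q] mT q mlq unfolding T_def by auto
            then show ?thesis using mq by simp
          qed
        qed
        then have "card T \<le> card {m..<m + a}" by (intro card_mono) auto
        then show ?thesis unfolding T_def by simp
      qed
      have "card S \<le> card (\<Union>k\<in>{..<M}. {p\<in>S. i p = k})" by (intro card_mono SU) (use fS in auto)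
      also have "\<dots> \<le> (\<Sum>k\<in>{..<M}. card {p\<in>S. i p = k})" by (rule card_UN_le) simp
      also have "\<dots> \<le> (\<Sum>k\<in>{..<M}. a)" by (intro sum_mono blk)
      also have "\<dots> = M * a" by simp
      finally have cS: "real (card S) \<le> real M * real a" by (simp only: of_nat_le_iff of_nat_mult[symmetric])
      have aR: "real a \<le> real x powr 0.6 + 1" unfolding a_def using real_nat_ceil(2)[of "real x powr 0.6"] by simp
      have bR: "real b \<ge> real x powr 0.9 - 1" unfolding b_def using real_nat_floor(2)[of "real x powr 0.9"] by simp
      have bpos: "real x powr 0.9 - 1 > 0" using xp9' by simp
      have MR: "real M \<le> 5 * real x / (real x powr 0.9 - 1) + 1"
      proof -
        have "real (5 * x div b) \<le> real (5 * x) / real b" by (rule of_nat_div_le_of_nat)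
        also have "\<dots> \<le> 5 * real x / (real x powr 0.9 - 1)"
          using bR bpos b1 by (simp only: of_nat_mult of_nat_numeral, intro divide_left_mono) auto
        finally show ?thesis unfolding M_def by simp
      qed
      have "real M * real a \<le> (5 * real x / (real x powr 0.9 - 1) + 1) * (real x powr 0.6 + 1)"
        using MR aR by (intro mult_mono) auto
      also have "\<dots> < (real x * ln 4 - ln (6 * real x)) / ln (6 * real x) - sqrt (6 * real x) * log 2 (6 * real x)"
        using X1[OF xX1] by (simp add: mult.commute)
      also have "\<dots> \<le> real (card S)" unfolding S_def using primes_in_count[of x] x2 by simp
      finally show False using cS by simp
    qed
  qed
qed

lemma k_min_pow: assumes "a \<ge> 1" shows "k_min (a ^ j) \<le> k_min a ^ j"
proof (induction j)
  case 0 then show ?case using k_min_le[of 1] by simp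
next
  case (Suc j)
  have "a ^ j \<ge> 1" using assms by simp
  then have "k_min (a * a ^ j) \<le> k_min a * k_min (a ^ j)" using k_min_mult assms by blast
  also have "\<dots> \<le> k_min a * k_min a ^ j" using Suc.IH by simp
  finally show ?case by simp
qed

lemma prime_sq_c: assumes p: "prime p" "p > 2" and y: "0 < y" "y \<le> real p"
  shows "real (k_min (p ^ 2)) \<le> real p * (1 + 5 / sqrt y)"
proof -
  have sp: "sqrt (real p) \<ge> 1" using p by simp
  have "real (k_min (p ^ 2)) \<le> real p + 2 * sqrt (real p) + 3"
    using k_min_prime_sq[OF p] by (simp add: power2_eq_square)
  also have "\<dots> \<le> real p + 5 * sqrt (real p)" using sp by simp
  also have "5 * sqrt (real p) = real p * (5 / sqrt (real p))"
  proof -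
    have "real p = sqrt (real p) * sqrt (real p)" by simp
    then show ?thesis using sp by (simp add: field_simps)
  qed
  also have "real p + real p * (5 / sqrt (real p)) \<le> real p + real p * (5 / sqrt y)"
    using y by (intro add_left_mono mult_left_mono divide_left_mono real_sqrt_le_mono) auto
  finally show ?thesis by (simp add: algebra_simps)
qed

lemma prod_bound:
  assumes p: "prime p" "p > 2" and q: "prime q" "q > 2" and y: "0 < y" "y \<le> real p" "y \<le> real q"
  shows "real (k_min ((p ^ a * q ^ b) ^ 2)) \<le> real (p ^ a * q ^ b) * (1 + 5 / sqrt y) ^ (a + b)"
proof -
  let ?c = "1 + 5 / sqrt y"
  have c0: "?c \<ge> 0" using y by simp
  have e: "(p ^ a * q ^ b) ^ 2 = (p ^ 2) ^ a * (q ^ 2) ^ b" by (simp add: power_mult_distrib power_mult[symmetric] mult.commute)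
  have p1: "(p ^ 2) ^ a \<ge> 1" "(q ^ 2) ^ b \<ge> 1" "p ^ 2 \<ge> 1" "q ^ 2 \<ge> 1" using p q by simp_all
  have "k_min ((p ^ 2) ^ a * (q ^ 2) ^ b) \<le> k_min ((p ^ 2) ^ a) * k_min ((q ^ 2) ^ b)" by (rule k_min_mult[OF p1(1,2)])
  also have "\<dots> \<le> k_min (p ^ 2) ^ a * k_min (q ^ 2) ^ b" by (intro mult_mono k_min_pow p1) auto
  finally have "real (k_min ((p ^ a * q ^ b) ^ 2)) \<le> real (k_min (p ^ 2)) ^ a * real (k_min (q ^ 2)) ^ b"
    unfolding e by (metis of_nat_le_iff of_nat_mult of_nat_power)
  also have "\<dots> \<le> (real p * ?c) ^ a * (real q * ?c) ^ b"
    using c0 by (intro mult_mono power_mono prime_sq_c p q y) auto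
  also have "\<dots> = real (p ^ a * q ^ b) * ?c ^ (a + b)" by (simp add: power_mult_distrib power_add)
  finally show ?thesis .
qed

lemma main_bound:
  fixes n X0 :: nat and L :: real
  assumes pairs: "\<forall>x\<ge>X0. \<exists>p q. prime p \<and> prime q \<and> x < p \<and> p < q \<and> q \<le> 6 * x \<and>
      real x powr 0.6 \<le> real q - real p \<and> real q - real p \<le> real x powr 0.9"
    and Ldef: "L = ln (real n) / 2" and n1: "n \<ge> 1"
    and c1: "L^2 - 1 \<ge> real X0" and c2: "L^2 - 1 \<ge> 3"
    and c3: "L / ln (6 * L^2) - 1 \<ge> 6 * ln (6 * L^2) * (L^2) powr 0.4"
  shows "real (k_min n) \<le> sqrt (real n) * (exp (5 * L / (ln (L^2 - 1) * sqrt (L^2 - 1))) + 4 * sqrt (2 * (L^2 - 1) powr (-0.1)))"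
proof -
  have "ln (real n) \<ge> 0" using n1 by simp
  then have L0: "L \<ge> 0" using Ldef by simp
  have L2: "L > 0"
  proof (rule ccontr)
    assume "\<not> L > 0" then have "L = 0" using L0 by simp
    then show False using c2 by simp
  qed
  have nexp: "real n = exp (2 * L)"
  proof -
    have "exp (2 * L) = exp (ln (real n))" by (simp add: Ldef)
    also have "\<dots> = real n" using n1 by simp
    finally show ?thesis by simp
  qed
  define x where "x = nat \<lfloor>L^2\<rfloor>"
  have xl: "real x \<le> L^2" "L^2 - 1 < real x" unfolding x_def using real_nat_floor[of "L^2"] by auto
  have xX0: "x \<ge> X0" using xl c1 by linarith
  obtain p q where pq: "prime p" "prime q" "x < p" "p < q" "q \<le> 6 * x"
    "real x powr 0.6 \<le> real q - real p" "real q - real p \<le> real x powr 0.9"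
    using pairs xX0 by blast
  have x3: "real x > 3" using xl c2 by linarith
  have xpos: "real x > 0" using x3 by simp
  have p2: "p > 2" using pq x3 by linarith
  have q2: "q > 2" using pq p2 by simp
  have rp: "real p > real x" "real q > real p" "real q \<le> 6 * real x" using pq by auto
  define \<alpha> where "\<alpha> = ln (real p)"
  define \<beta> where "\<beta> = ln (real q)"
  define d where "d = \<beta> - \<alpha>"
  have lnx: "ln (real x) > 0" using x3 by simp
  have apos: "\<alpha> > ln (real x)" unfolding \<alpha>_def using rp xpos by simp
  have \<alpha>0: "\<alpha> > 0" using apos lnx by simp
  have ale: "\<alpha> \<le> ln (6 * L^2)"
  proof -
    have "real p \<le> 6 * L^2" using rp xl by linarith
    moreover have "real p > 0" using rp xpos by simp
    ultimately show ?thesis unfolding \<alpha>_def by (subst ln_le_cancel_iff) auto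
  qed
  have pp: "real p > 0" "real q > 0" using rp xpos by auto
  have d_eq: "d = ln (real q / real p)" unfolding d_def \<alpha>_def \<beta>_def using pp by (simp add: ln_div)
  have dup: "d \<le> (real q - real p) / real p"
  proof -
    have "d \<le> real q / real p - 1" unfolding d_eq using pp by (intro ln_le_minus_one) simp
    also have "\<dots> = (real q - real p) / real p" using pp by (simp add: field_simps)
    finally show ?thesis .
  qed
  have dlow: "d \<ge> (real q - real p) / real q"
  proof -
    have "ln (real p / real q) \<le> real p / real q - 1" using pp by (intro ln_le_minus_one) simp
    moreover have "ln (real p / real q) = - d" unfolding d_def \<alpha>_def \<beta>_def using pp by (simp add: ln_div)
    moreover have "real p / real q - 1 = - ((real q - real p) / real q)" using pp by (simp add: field_simps)
    ultimately show ?thesis by linarith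
  qed
  have dpos: "d > 0" using dlow rp pp by (smt (verit) divide_pos_pos)
  have d1: "d \<ge> real x powr 0.6 / (6 * real x)"
  proof -
    have "real x powr 0.6 / (6 * real x) \<le> (real q - real p) / (6 * real x)"
      using pq(6) xpos by (intro divide_right_mono) auto
    also have "\<dots> \<le> (real q - real p) / real q" using rp pp by (intro divide_left_mono) auto
    finally show ?thesis using dlow by linarith
  qed
  define \<delta> where "\<delta> = (L^2 - 1) powr (-0.1)"
  have d2: "d \<le> \<delta>"
  proof -
    have "d \<le> real x powr 0.9 / real p" using dup pq(7) pp by (smt (verit) divide_right_mono)
    also have "\<dots> \<le> real x powr 0.9 / real x" using rp xpos by (intro divide_left_mono) auto
    also have "\<dots> = real x powr (-0.1)"
    proof -
      have "real x powr (0.9 - 1) = real x powr 0.9 / real x powr 1" by (rule powr_diff)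
      then show ?thesis using xpos by simp
    qed
    also have "\<dots> \<le> \<delta>" unfolding \<delta>_def using xl c2 by (intro powr_mono2') auto
    finally show ?thesis .
  qed
  have ad: "\<alpha> / d \<le> 6 * ln (6 * L^2) * (L^2) powr 0.4"
  proof -
    have l6: "ln (6 * L^2) > 0" using c2 by (intro ln_gt_zero) linarith
    have "\<alpha> / d \<le> ln (6 * L^2) / d" using ale dpos by (intro divide_right_mono) auto
    also have "\<dots> \<le> ln (6 * L^2) / (real x powr 0.6 / (6 * real x))"
      using d1 l6 xpos dpos by (intro divide_left_mono) auto
    also have "\<dots> = 6 * ln (6 * L^2) * (real x / real x powr 0.6)" using xpos by (simp add: field_simps)
    also have "real x / real x powr 0.6 = real x powr 0.4"
    proof -
      have "real x powr (1 - 0.6) = real x powr 1 / real x powr 0.6" by (rule powr_diff)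
      then show ?thesis using xpos by simp
    qed
    also have "real x powr 0.4 \<le> (L^2) powr 0.4" using xl xpos by (intro powr_mono2) auto
    finally show ?thesis using l6 by simp
  qed
  define h where "h = nat \<lfloor>L / \<alpha>\<rfloor>"
  have La0: "L / \<alpha> \<ge> 0" using L0 \<alpha>0 by simp
  have h1: "real h \<le> L / \<alpha>" "L / \<alpha> - 1 < real h" unfolding h_def using real_nat_floor[OF La0] by auto
  have La: "L / \<alpha> \<ge> L / ln (6 * L^2)" using ale \<alpha>0 L0 by (intro divide_left_mono) auto
  have hd: "real h * d \<ge> \<alpha>"
  proof -
    have "\<alpha> / d < real h" using h1 La c3 ad by linarith
    then show ?thesis using dpos by (simp add: divide_less_eq mult.commute)
  qed
  have ha: "real h * \<alpha> \<le> L" "real h * \<alpha> > L - \<alpha>"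
  proof -
    show "real h * \<alpha> \<le> L" using h1(1) \<alpha>0 by (simp add: le_divide_eq)
    have "(L / \<alpha> - 1) * \<alpha> < real h * \<alpha>" using h1(2) \<alpha>0 by (intro mult_strict_right_mono) auto
    then show "real h * \<alpha> > L - \<alpha>" using \<alpha>0 by (simp add: algebra_simps)
  qed
  define t where "t = (L - real h * \<alpha>) / d"
  have t0: "t \<ge> 0" unfolding t_def using ha dpos by simp
  have th: "t < real h"
  proof -
    have "L - real h * \<alpha> < real h * d" using ha hd by linarith
    then show ?thesis unfolding t_def using dpos by (simp add: divide_less_eq)
  qed
  define b where "b = nat \<lfloor>t\<rfloor>"
  have b1: "real b \<le> t" "t - 1 < real b" unfolding b_def using real_nat_floor[OF t0] by auto
  have bh: "b \<le> h" using b1 th by linarith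
  define a where "a = h - b"
  have ab: "real a + real b = real h" using bh by (simp add: a_def)
  define P where "P = p ^ a * q ^ b"
  have Ppos: "real P > 0" unfolding P_def using pp by simp
  have P1: "P \<ge> 1" using Ppos by simp
  have lnP: "ln (real P) = real h * \<alpha> + real b * d"
  proof -
    have "ln (real P) = real a * \<alpha> + real b * \<beta>" unfolding P_def \<alpha>_def \<beta>_def using pp
      by (simp add: ln_mult ln_realpow)
    also have "\<dots> = (real a + real b) * \<alpha> + real b * d" by (simp add: d_def algebra_simps)
    finally show ?thesis using ab by simp
  qed
  have lnP1: "ln (real P) \<le> L"
  proof -
    have "real b * d \<le> t * d" using b1 dpos by (intro mult_right_mono) auto
    also have "t * d = L - real h * \<alpha>" unfolding t_def using dpos by simp
    finally show ?thesis using lnP by simp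
  qed
  have lnP2: "ln (real P) \<ge> L - d"
  proof -
    have "(t - 1) * d \<le> real b * d" using b1 dpos by (intro mult_right_mono) auto
    also have "(t - 1) * d = t * d - d" by (simp add: left_diff_distrib)
    also have "t * d = L - real h * \<alpha>" unfolding t_def using dpos by simp
    finally show ?thesis using lnP by simp
  qed
  have PP: "real (P ^ 2) = exp (2 * ln (real P))"
  proof -
    have "exp (2 * ln (real P)) = exp (ln (real P)) ^ 2" by (simp add: exp_of_nat_mult[symmetric])
    then show ?thesis using Ppos by simp
  qed
  have P2n: "real (P ^ 2) \<le> real n" unfolding PP nexp using lnP1 by simp
  have P2n': "P ^ 2 \<le> n" using P2n by (simp only: of_nat_le_iff)
  have P2low: "real (P ^ 2) \<ge> real n * exp (- 2 * d)"
  proof -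
    have "real n * exp (- 2 * d) = exp (2 * L - 2 * d)" unfolding nexp by (simp add: exp_add[symmetric])
    also have "\<dots> \<le> exp (2 * ln (real P))" using lnP2 by simp
    finally show ?thesis unfolding PP .
  qed
  have Psq: "real P \<le> sqrt (real n)"
  proof -
    have "sqrt (real (P ^ 2)) \<le> sqrt (real n)" using P2n by (rule real_sqrt_le_mono)
    then show ?thesis by simp
  qed
  define U1 where "U1 = exp (5 * L / (ln (L^2 - 1) * sqrt (L^2 - 1)))"
  have kP: "real (k_min (P ^ 2)) \<le> sqrt (real n) * U1"
  proof -
    have "real (k_min (P ^ 2)) \<le> real P * (1 + 5 / sqrt (real x)) ^ (a + b)"
      unfolding P_def by (rule prod_bound[OF pq(1) p2 pq(2) q2 xpos]) (use rp in auto)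
    also have "a + b = h" using bh by (simp add: a_def)
    also have "(1 + 5 / sqrt (real x)) ^ h \<le> exp (5 / sqrt (real x)) ^ h"
      by (intro power_mono) (auto simp: add_nonneg_nonneg)
    also have "\<dots> = exp (real h * (5 / sqrt (real x)))" by (simp add: exp_of_nat_mult[symmetric])
    also have "\<dots> \<le> U1"
    proof -
      have lx: "ln (L^2 - 1) > 0" using c2 by (intro ln_gt_zero) linarith
      have lxx: "ln (L^2 - 1) \<le> ln (real x)" using xl c2 by simp
      have sx: "sqrt (L^2 - 1) \<le> sqrt (real x)" using xl by (intro real_sqrt_le_mono) linarith
      have sx0: "sqrt (L^2 - 1) > 0" using c2 by simp
      have "real h \<le> L / \<alpha>" by (rule h1(1))
      also have "\<dots> \<le> L / ln (L^2 - 1)" using apos lxx lx L0 by (intro divide_left_mono) auto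
      finally have hh: "real h \<le> L / ln (L^2 - 1)" .
      have "real h * (5 / sqrt (real x)) \<le> (L / ln (L^2 - 1)) * (5 / sqrt (L^2 - 1))"
        using hh sx sx0 lx L0 by (intro mult_mono divide_left_mono) auto
      also have "\<dots> = 5 * L / (ln (L^2 - 1) * sqrt (L^2 - 1))" by (simp add: field_simps)
      finally show ?thesis unfolding U1_def by simp
    qed
    finally have "real (k_min (P ^ 2)) \<le> real P * U1" using Ppos by (simp add: mult_left_mono)
    also have "\<dots> \<le> sqrt (real n) * U1" using Psq unfolding U1_def by (intro mult_right_mono) auto
    finally show ?thesis .
  qed
  have U1pos: "U1 > 0" unfolding U1_def by simp
  have del0: "\<delta> \<ge> 0" unfolding \<delta>_def by simp
  define r where "r = n - P ^ 2"
  have nr: "n = P ^ 2 + r" using P2n' by (simp add: r_def)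
  have rr: "real r \<le> 2 * \<delta> * real n"
  proof -
    have "real r = real n - real (P ^ 2)" using P2n' by (simp add: r_def of_nat_diff)
    also have "\<dots> \<le> real n - real n * exp (- 2 * d)" using P2low by simp
    also have "\<dots> = real n * (1 - exp (- 2 * d))" by (simp add: algebra_simps)
    also have "\<dots> \<le> real n * (2 * d)"
    proof -
      have "1 + (- 2 * d) \<le> exp (- 2 * d)" by (rule exp_ge_add_one_self)
      then show ?thesis by (intro mult_left_mono) auto
    qed
    also have "\<dots> \<le> real n * (2 * \<delta>)" using d2 by (intro mult_left_mono) auto
    finally show ?thesis by (simp add: algebra_simps)
  qed
  show ?thesis
  proof (cases "r = 0")
    case True
    then have "real (k_min n) \<le> sqrt (real n) * U1" using kP nr by simp
    also have "\<dots> \<le> sqrt (real n) * (U1 + 4 * sqrt (2 * \<delta>))" using del0 by (intro mult_left_mono) auto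
    finally show ?thesis unfolding U1_def \<delta>_def .
  next
    case False
    then have r1: "r \<ge> 1" by simp
    have P21: "P ^ 2 \<ge> 1" using P1 by simp
    have "k_min n \<le> k_min (P ^ 2) + k_min r" unfolding nr by (rule k_min_add[OF P21 r1])
    then have "real (k_min n) \<le> real (k_min (P ^ 2)) + real (k_min r)" by linarith
    also have "real (k_min r) \<le> 4 * sqrt (real r)" by (rule k_min_crude[OF r1])
    also have "sqrt (real r) \<le> sqrt (2 * \<delta> * real n)" using rr by (rule real_sqrt_le_mono)
    also have "sqrt (2 * \<delta> * real n) = sqrt (2 * \<delta>) * sqrt (real n)" by (simp add: real_sqrt_mult)
    finally have "real (k_min n) \<le> sqrt (real n) * U1 + 4 * (sqrt (2 * \<delta>) * sqrt (real n))" using kP by linarith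
    also have "\<dots> = sqrt (real n) * (U1 + 4 * sqrt (2 * \<delta>))" by (simp add: algebra_simps)
    finally show ?thesis unfolding U1_def \<delta>_def .
  qed
qed

definition Ufun :: "real \<Rightarrow> real" where
  "Ufun y = exp (5 * (ln y / 2) / (ln ((ln y / 2)^2 - 1) * sqrt ((ln y / 2)^2 - 1))) + 4 * sqrt (2 * ((ln y / 2)^2 - 1) powr (-0.1))"

lemma Ufun_lim: "(Ufun \<longlongrightarrow> 1) at_top"
  unfolding Ufun_def by real_asymp

lemma ev_c3: "eventually (\<lambda>y::real. (ln y / 2) / ln (6 * (ln y / 2)^2) - 1 \<ge> 6 * ln (6 * (ln y / 2)^2) * ((ln y / 2)^2) powr 0.4) at_top"
  by real_asymp

lemma lim_L2: "filterlim (\<lambda>y::real. (ln y / 2)^2 - 1) at_top at_top"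
  by real_asymp

theorem theorem3:
  shows "(\<lambda>n. real (k_min n)) \<sim>[at_top] (\<lambda>n. sqrt (real n))"
proof (rule asymp_equivI')
  obtain X0 where pairs: "\<forall>x\<ge>X0. \<exists>p q. prime p \<and> prime q \<and> x < p \<and> p < q \<and> q \<le> 6 * x \<and>
      real x powr 0.6 \<le> real q - real p \<and> real q - real p \<le> real x powr 0.9"
    using pair_exists by blast
  have ev1: "eventually (\<lambda>y::real. (ln y / 2)^2 - 1 \<ge> real X0 \<and> (ln y / 2)^2 - 1 \<ge> 3) at_top"
  proof -
    have a: "\<And>Z. eventually (\<lambda>y::real. Z \<le> (ln y / 2)^2 - 1) at_top"
      using lim_L2 unfolding filterlim_at_top by blast
    show ?thesis by (rule eventually_conj[OF a a])
  qed
  have evr: "eventually (\<lambda>y::real. y \<ge> 1 \<and> ((ln y / 2)^2 - 1 \<ge> real X0 \<and> (ln y / 2)^2 - 1 \<ge> 3) \<and>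
      (ln y / 2) / ln (6 * (ln y / 2)^2) - 1 \<ge> 6 * ln (6 * (ln y / 2)^2) * ((ln y / 2)^2) powr 0.4) at_top"
    by (intro eventually_conj ev1 ev_c3) (simp add: eventually_ge_at_top)
  have evn: "eventually (\<lambda>n::nat. real n \<ge> 1 \<and> ((ln (real n) / 2)^2 - 1 \<ge> real X0 \<and> (ln (real n) / 2)^2 - 1 \<ge> 3) \<and>
      (ln (real n) / 2) / ln (6 * (ln (real n) / 2)^2) - 1 \<ge> 6 * ln (6 * (ln (real n) / 2)^2) * ((ln (real n) / 2)^2) powr 0.4) sequentially"
    by (rule eventually_compose_filterlim[OF evr filterlim_real_sequentially])
  have upper: "eventually (\<lambda>n::nat. real (k_min n) / sqrt (real n) \<le> Ufun (real n)) sequentially"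
    using evn
  proof eventually_elim
    case (elim n)
    then have n1: "n \<ge> 1" by simp
    have "real (k_min n) \<le> sqrt (real n) * Ufun (real n)"
      unfolding Ufun_def by (rule main_bound[OF pairs refl n1]) (use elim in auto)
    then show ?case using n1 by (simp add: divide_le_eq mult.commute)
  qed
  have lower: "eventually (\<lambda>n::nat. 1 \<le> real (k_min n) / sqrt (real n)) sequentially"
    using eventually_ge_at_top[of 1]
  proof eventually_elim
    case (elim n)
    then show ?case using k_min_lower[of n] by (simp add: le_divide_eq)
  qed
  have Ulim: "((\<lambda>n::nat. Ufun (real n)) \<longlongrightarrow> 1) sequentially"
    by (rule filterlim_compose[OF Ufun_lim filterlim_real_sequentially])
  show "((\<lambda>n. real (k_min n) / sqrt (real n)) \<longlongrightarrow> 1) at_top"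
    by (rule tendsto_sandwich[OF lower upper tendsto_const Ulim])
qed

end
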